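(* Let $\mathcal C$ be a $k$-coloured operad admitting the presentation $(G,\leftrightarrow)$. Then the enveloping operad $\mathrm{Env}(\mathcal C)$ admits the presentation $(\{\mathfrak c(g):g\in G\},\leftrightarrow')$. Here $S'\leftrightarrow' T'$ if and only if $S\leftrightarrow T$, where $S'$ (resp. $T'$) denotes the uncoloured syntax tree obtained from the coloured syntax tree $S$ (resp. $T$) by replacing each node labelled $x$ by the corolla $\mathfrak c(x)$ (i.e. forgetting colours). In other words, $\mathrm{Env}(\mathcal C)$ is isomorphic to the free uncoloured operad on the elements of $G$ (colours forgotten) modulo the operadic congruence generated by the relations $S'\leftrightarrow'T'$.
   Context: All operads are nonsymmetric operads in the category of sets. Fix $k\ge1$ and write $[k]=\{1,\dots,k\}$. A $k$-coloured collection is a graded set $G=\biguplus_{n\ge2}G(n)$ with maps $\mathrm{Out},\mathrm{In}_i$ to $[k]$ ($1\le i\le n$ for elements of $G(n)$). The free $k$-coloured operad $\mathcal F(G)$ consists of coloured syntax trees on $G$: planar rooted trees whose internal nodes of arity $\ell$ are labelled by elements of $G(\ell)$, such that if a node labelled $y$ is the $i$th child of a node labelled $x$, then $\mathrm{In}_i(x)=\mathrm{Out}(y)$. Composition is grafting of a root on a leaf of matching colour, together with one unit per colour. A $k$-coloured operad $\mathcal C$ (partial compositions $x\circ_i y$ defined exactly when $\mathrm{Out}(y)=\mathrm{In}_i(x)$, with $\mathcal C(1)$ consisting only of one unit per colour, and each $\mathcal C(n)$ finite) admits the presentation $(G,\leftrightarrow)$ if $G$ is a $k$-coloured collection and $\leftrightarrow$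 is an equivalence relation on $\mathcal F(G)$ such that $\mathcal C$ is isomorphic to $\mathcal F(G)/\!\equiv$, where $\equiv$ is the smallest coloured operadic congruence containing $\leftrightarrow$. The same notion applies to uncoloured operads ($k=1$). Let $\mathcal C^+=\mathcal C\setminus\mathcal C(1)$. The enveloping operad $\mathrm{Env}(\mathcal C)$ is the quotient of the free uncoloured operad on $\mathcal C^+$ (colours forgotten) by the smallest operadic congruence with $\mathfrak c(x)\circ_i\mathfrak c(y)\equiv\mathfrak c(x\circ_i y)$ whenever $x\circ_i y$ is defined in $\mathcal C$. Here $\mathfrak c(x)$ denotes the corolla (one-node tree) labelled $x$. *)

theory Defs
  imports Main
begin

text \<open>A (k-)coloured operad is described by a carrier set, an arity map, an output colour,
  input colours (indexed from 1), total-function partial compositions (meaningful only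
  where defined) and one unit per colour.
  Uncoloured operads are the case k = 1.\<close>

record 'a coloperad =
  elems :: "'a set"
  ar    :: "'a \<Rightarrow> nat"
  outc  :: "'a \<Rightarrow> nat"
  inc   :: "'a \<Rightarrow> nat \<Rightarrow> nat"
  pcomp :: "'a \<Rightarrow> nat \<Rightarrow> 'a \<Rightarrow> 'a"
  unit  :: "nat \<Rightarrow> 'a"

definition comp_defined :: "'a coloperad \<Rightarrow> 'a \<Rightarrow> nat \<Rightarrow> 'a \<Rightarrow> bool" where
  "comp_defined Op x i y \<longleftrightarrow> x \<in> elems Op \<and> y \<in> elems Op \<and> 1 \<le> i \<and> i \<le> ar Op x
     \<and> inc Op x i = outc Op y"

definition is_coloperad :: "nat \<Rightarrow> 'a coloperad \<Rightarrow> bool" where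
  "is_coloperad k Op \<longleftrightarrow>
     (\<forall>x\<in>elems Op. 1 \<le> ar Op x \<and> outc Op x \<in> {1..k} \<and> (\<forall>i\<in>{1..ar Op x}. inc Op x i \<in> {1..k}))
   \<and> (\<forall>x i y. comp_defined Op x i y \<longrightarrow>
        pcomp Op x i y \<in> elems Op
      \<and> ar Op (pcomp Op x i y) = ar Op x + ar Op y - 1
      \<and> outc Op (pcomp Op x i y) = outc Op x
      \<and> (\<forall>j\<in>{1..ar Op x + ar Op y - 1}. inc Op (pcomp Op x i y) j =
            (if j < i then inc Op x j
             else if j < i + ar Op y then inc Op y (j - i + 1)
             else inc Op x (j + 1 - ar Op y))))
   \<and> (\<forall>c\<in>{1..k}. unit Op c \<in> elems Op \<and> ar Op (unit Op c) = 1 \<and> outc Op (unit Op c) = c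
        \<and> inc Op (unit Op c) 1 = c)
   \<and> (\<forall>x\<in>elems Op. pcomp Op (unit Op (outc Op x)) 1 x = x)
   \<and> (\<forall>x\<in>elems Op. \<forall>i\<in>{1..ar Op x}. pcomp Op x i (unit Op (inc Op x i)) = x)
   \<and> (\<forall>x y z i j. comp_defined Op x i y \<longrightarrow> comp_defined Op y j z \<longrightarrow>
        pcomp Op (pcomp Op x i y) (i + j - 1) z = pcomp Op x i (pcomp Op y j z))
   \<and> (\<forall>x y z i j. comp_defined Op x i y \<longrightarrow> comp_defined Op x j z \<longrightarrow> i < j \<longrightarrow>
        pcomp Op (pcomp Op x i y) (j + ar Op y - 1) z = pcomp Op (pcomp Op x j z) i y)
   \<and> (\<forall>x\<in>elems Op. ar Op x = 1 \<longrightarrow> (\<exists>c\<in>{1..k}. x = unit Op c))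
   \<and> (\<forall>n. finite {x\<in>elems Op. ar Op x = n})"

definition is_iso :: "nat \<Rightarrow> 'a coloperad \<Rightarrow> 'b coloperad \<Rightarrow> ('a \<Rightarrow> 'b) \<Rightarrow> bool" where
  "is_iso k Op1 Op2 f \<longleftrightarrow> bij_betw f (elems Op1) (elems Op2)
   \<and> (\<forall>x\<in>elems Op1. ar Op2 (f x) = ar Op1 x \<and> outc Op2 (f x) = outc Op1 x
        \<and> (\<forall>i\<in>{1..ar Op1 x}. inc Op2 (f x) i = inc Op1 x i))
   \<and> (\<forall>x i y. comp_defined Op1 x i y \<longrightarrow> f (pcomp Op1 x i y) = pcomp Op2 (f x) i (f y))
   \<and> (\<forall>c\<in>{1..k}. f (unit Op1 c) = unit Op2 c)"

definition isomorphic :: "nat \<Rightarrow> 'a coloperad \<Rightarrow> 'b coloperad \<Rightarrow> bool" where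
  "isomorphic k Op1 Op2 \<longleftrightarrow> (\<exists>f. is_iso k Op1 Op2 f)"

definition is_congruence :: "'a coloperad \<Rightarrow> 'a rel \<Rightarrow> bool" where
  "is_congruence Op E \<longleftrightarrow> equiv (elems Op) E
   \<and> (\<forall>(x,y)\<in>E. ar Op x = ar Op y \<and> outc Op x = outc Op y
        \<and> (\<forall>i\<in>{1..ar Op x}. inc Op x i = inc Op y i))
   \<and> (\<forall>x x' y y' i. (x,x') \<in> E \<longrightarrow> (y,y') \<in> E \<longrightarrow> comp_defined Op x i y \<longrightarrow>
        (pcomp Op x i y, pcomp Op x' i y') \<in> E)"

definition cong_gen :: "'a coloperad \<Rightarrow> 'a rel \<Rightarrow> 'a rel" where
  "cong_gen Op R = {(x,y). \<forall>E. is_congruence Op E \<and> R \<subseteq> E \<longrightarrow> (x,y) \<in> E}"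

definition quot_op :: "'a coloperad \<Rightarrow> 'a rel \<Rightarrow> 'a set coloperad" where
  "quot_op Op E = \<lparr> elems = elems Op // E,
     ar = (\<lambda>X. ar Op (SOME x. x \<in> X)),
     outc = (\<lambda>X. outc Op (SOME x. x \<in> X)),
     inc = (\<lambda>X i. inc Op (SOME x. x \<in> X) i),
     pcomp = (\<lambda>X i Y. E `` {pcomp Op (SOME x. x \<in> X) i (SOME y. y \<in> Y)}),
     unit = (\<lambda>c. E `` {unit Op c}) \<rparr>"

definition is_collection :: "nat \<Rightarrow> 'g set \<Rightarrow> ('g \<Rightarrow> nat) \<Rightarrow> ('g \<Rightarrow> nat) \<Rightarrow> ('g \<Rightarrow> nat \<Rightarrow> nat) \<Rightarrow> bool" where
  "is_collection k G arG outG inG \<longleftrightarrow>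
     (\<forall>g\<in>G. 2 \<le> arG g \<and> outG g \<in> {1..k} \<and> (\<forall>i\<in>{1..arG g}. inG g i \<in> {1..k}))"

text \<open>Planar rooted trees; a leaf carries its colour (a tree that is a single leaf of
  colour c is the unit of colour c).\<close>

datatype 'g stree = Leaf nat | Node 'g "'g stree list"

fun leaf_cols :: "'g stree \<Rightarrow> nat list" where
  "leaf_cols (Leaf c) = [c]"
| "leaf_cols (Node g ts) = concat (map leaf_cols ts)"

definition nleaves :: "'g stree \<Rightarrow> nat" where
  "nleaves t = length (leaf_cols t)"

fun tout :: "('g \<Rightarrow> nat) \<Rightarrow> 'g stree \<Rightarrow> nat" where
  "tout outG (Leaf c) = c"
| "tout outG (Node g ts) = outG g"

fun valid_tree :: "nat \<Rightarrow> 'g set \<Rightarrow> ('g \<Rightarrow> nat) \<Rightarrow> ('g \<Rightarrow> nat) \<Rightarrow> ('g \<Rightarrow> nat \<Rightarrow> nat)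
                    \<Rightarrow> 'g stree \<Rightarrow> bool" where
  "valid_tree k G arG outG inG (Leaf c) \<longleftrightarrow> c \<in> {1..k}"
| "valid_tree k G arG outG inG (Node g ts) \<longleftrightarrow> g \<in> G \<and> length ts = arG g
     \<and> (\<forall>t\<in>set ts. valid_tree k G arG outG inG t)
     \<and> (\<forall>i<length ts. tout outG (ts ! i) = inG g (i + 1))"

text \<open>Grafting the root of T on the i-th leaf (1-indexed) of a tree.\<close>

fun graft :: "'g stree \<Rightarrow> nat \<Rightarrow> 'g stree \<Rightarrow> 'g stree"
and graft_list :: "'g stree list \<Rightarrow> nat \<Rightarrow> 'g stree \<Rightarrow> 'g stree list" where
  "graft (Leaf c) i T = (if i = 1 then T else Leaf c)"
| "graft (Node g ts) i T = Node g (graft_list ts i T)"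
| "graft_list [] i T = []"
| "graft_list (t # ts) i T =
     (if i \<le> nleaves t then graft t i T # ts else t # graft_list ts (i - nleaves t) T)"

definition free_op :: "'g set \<Rightarrow> ('g \<Rightarrow> nat) \<Rightarrow> ('g \<Rightarrow> nat) \<Rightarrow> ('g \<Rightarrow> nat \<Rightarrow> nat) \<Rightarrow> nat
                       \<Rightarrow> 'g stree coloperad" where
  "free_op G arG outG inG k = \<lparr> elems = {t. valid_tree k G arG outG inG t},
     ar = nleaves,
     outc = tout outG,
     inc = (\<lambda>t i. leaf_cols t ! (i - 1)),
     pcomp = graft,
     unit = Leaf \<rparr>"

text \<open>Op admits the presentation (G, R): R is a relation on F(G) relating only syntax trees
  with the same profile (so that the congruence it generates exists), and Op is
  isomorphic to F(G) modulo the smallest operadic congruence containing R.\<close>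

definition admits_presentation :: "nat \<Rightarrow> 'a coloperad \<Rightarrow> 'g set \<Rightarrow> ('g \<Rightarrow> nat) \<Rightarrow> ('g \<Rightarrow> nat)
    \<Rightarrow> ('g \<Rightarrow> nat \<Rightarrow> nat) \<Rightarrow> 'g stree rel \<Rightarrow> bool" where
  "admits_presentation k Op G arG outG inG R \<longleftrightarrow>
     (let F = free_op G arG outG inG k in
       R \<subseteq> elems F \<times> elems F
     \<and> (\<forall>(S,T)\<in>R. ar F S = ar F T \<and> outc F S = outc F T
          \<and> (\<forall>i\<in>{1..ar F S}. inc F S i = inc F T i))
     \<and> isomorphic k Op (quot_op F (cong_gen F R)))"

definition Cplus :: "'a coloperad \<Rightarrow> 'a set" where
  "Cplus C = {x \<in> elems C. 2 \<le> ar C x}"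

definition corolla :: "'a coloperad \<Rightarrow> 'a \<Rightarrow> 'a stree" where
  "corolla C x = Node x (replicate (ar C x) (Leaf 1))"

definition env_free :: "'a coloperad \<Rightarrow> 'a stree coloperad" where
  "env_free C = free_op (Cplus C) (ar C) (\<lambda>_. 1) (\<lambda>_ _. 1) 1"

definition env_rel :: "'a coloperad \<Rightarrow> 'a stree rel" where
  "env_rel C = {(graft (corolla C x) i (corolla C y), corolla C (pcomp C x i y)) | x i y.
                  x \<in> Cplus C \<and> y \<in> Cplus C \<and> comp_defined C x i y}"

definition Env :: "'a coloperad \<Rightarrow> 'a stree set coloperad" where
  "Env C = quot_op (env_free C) (cong_gen (env_free C) (env_rel C))"

fun forget :: "'g stree \<Rightarrow> 'g stree" where
  "forget (Leaf c) = Leaf 1"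
| "forget (Node g ts) = Node g (map forget ts)"

end

theory Submission
  imports Defs
begin


abbreviation nl :: "'g stree list \<Rightarrow> nat" where
  "nl ts \<equiv> length (concat (map leaf_cols ts))"

lemma nleaves_Node: "nleaves (Node g ts) = nl ts"
  by (simp add: nleaves_def)

lemma nl_cons: "nl (t # ts) = nleaves t + nl ts"
  by (simp add: nleaves_def)

lemma graft_out:
  shows "(i = 0 \<or> nleaves t < i) \<Longrightarrow> graft t i s = t"
    and "(i = 0 \<or> nl ts < i) \<Longrightarrow> graft_list ts i s = ts"
proof (induction t i s and ts i s rule: graft_graft_list.induct)
  case (1 c i T) then show ?case by (auto simp: nleaves_def)
next
  case (2 g ts i T) then show ?case by (auto simp: nleaves_def)
next
  case (3 i T) then show ?case by simp
next
  case (4 t ts i T) then show ?case by (auto simp: nleaves_def)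
qed

lemma graft_list_append:
  "graft_list (xs @ ys) i s = (if i \<le> nl xs then graft_list xs i s @ ys
      else xs @ graft_list ys (i - nl xs) s)"
proof (induction xs arbitrary: i)
  case Nil
  then show ?case using graft_out(2)[of i "[]"] graft_out(2)[of 0 ys s] by auto
next
  case (Cons x xs)
  then show ?case by (auto simp: nleaves_def diff_diff_add)
qed

lemma length_graft_list[simp]: "length (graft_list ts i s) = length ts"
  by (induction ts arbitrary: i) auto

lemma leaf_cols_graft:
  shows "1 \<le> i \<Longrightarrow> i \<le> nleaves t \<Longrightarrow>
     leaf_cols (graft t i s) = take (i - 1) (leaf_cols t) @ leaf_cols s @ drop i (leaf_cols t)"
    and "1 \<le> i \<Longrightarrow> i \<le> nl ts \<Longrightarrow>
     concat (map leaf_cols (graft_list ts i s)) = take (i - 1) (concat (map leaf_cols ts)) @ leaf_cols s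
        @ drop i (concat (map leaf_cols ts))"
proof (induction t i s and ts i s rule: graft_graft_list.induct)
  case (1 c i T) then show ?case by (auto simp: nleaves_def)
next
  case (2 g ts i T) then show ?case by (auto simp: nleaves_def)
next
  case (3 i T) then show ?case by simp
next
  case (4 t ts i T)
  show ?case
  proof (cases "i \<le> nleaves t")
    case True
    then show ?thesis using 4 by (simp add: nleaves_def)
  next
    case False
    then have "1 \<le> i - nleaves t" "i - nleaves t \<le> nl ts" using 4(4) by (auto simp: nleaves_def)
    then show ?thesis using 4 False by (simp add: nleaves_def)
  qed
qed

lemma nleaves_graft:
  "1 \<le> i \<Longrightarrow> i \<le> nleaves t \<Longrightarrow> nleaves (graft t i s) = nleaves t + nleaves s - 1"
  by (simp add: leaf_cols_graft nleaves_def)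

fun subst :: "'g stree \<Rightarrow> 'g stree list \<Rightarrow> 'g stree"
and substl :: "'g stree list \<Rightarrow> 'g stree list \<Rightarrow> 'g stree list" where
  "subst (Leaf c) us = (if us = [] then Leaf c else hd us)"
| "subst (Node g ts) us = Node g (substl ts us)"
| "substl [] us = []"
| "substl (t # ts) us = subst t (take (nleaves t) us) # substl ts (drop (nleaves t) us)"

lemma leaf_cols_subst:
  shows "length us = nleaves t \<Longrightarrow> leaf_cols (subst t us) = concat (map leaf_cols us)"
    and "length us = nl ts \<Longrightarrow> concat (map leaf_cols (substl ts us)) = concat (map leaf_cols us)"
proof (induction t us and ts us rule: subst_substl.induct)
  case (1 c us) then show ?case by (cases us) (auto simp: nleaves_def)
next
  case (2 g ts us) then show ?case by (simp add: nleaves_def)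
next
  case (3 us) then show ?case by simp
next
  case (4 t ts us)
  then have "concat (map leaf_cols (substl (t # ts) us)) =
      concat (map leaf_cols (take (nleaves t) us)) @ concat (map leaf_cols (drop (nleaves t) us))"
    by (simp add: nleaves_def)
  also have "\<dots> = concat (map leaf_cols us)"
    by (metis append_take_drop_id concat_append map_append)
  finally show ?case .
qed

lemma nleaves_subst: "length us = nleaves t \<Longrightarrow> nleaves (subst t us) = nl us"
  by (simp add: nleaves_def leaf_cols_subst)

lemma nl_take_drop: "nl xs = nl (take n xs) + nl (drop n xs)"
  by (metis append_take_drop_id concat_append length_append map_append)

lemma graft_subst:
  shows "length us = nleaves T \<Longrightarrow> graft (subst T us) i s = subst T (graft_list us i s)"
    and "length us = nl ts \<Longrightarrow> graft_list (substl ts us) i s = substl ts (graft_list us i s)"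
proof (induction T us and ts us arbitrary: i and i rule: subst_substl.induct)
  case (1 c us)
  then obtain u where u: "us = [u]" by (cases us) (auto simp: nleaves_def)
  show ?case
    using graft_out(1)[of i u s] by (auto simp: u)
next
  case (2 g ts us) then show ?case by (simp add: nleaves_def)
next
  case (3 us) then show ?case by simp
next
  case (4 t ts us)
  define n where "n = nleaves t"
  have ln: "length (take n us) = nleaves t" "length (drop n us) = nl ts"
    using 4(3) by (auto simp: n_def nleaves_def)
  have ns: "nleaves (subst t (take n us)) = nl (take n us)"
    using ln by (simp add: nleaves_subst)
  have ga: "graft_list us i s = (if i \<le> nl (take n us) then graft_list (take n us) i s @ drop n us
      else take n us @ graft_list (drop n us) (i - nl (take n us)) s)"
    using graft_list_append[of "take n us" "drop n us" i s] by simp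
  show ?case
  proof (cases "i \<le> nl (take n us)")
    case True
    then show ?thesis using 4(1)[OF ln(1)[unfolded n_def]] ln ns ga
      by (simp add: n_def[symmetric] min_def)
  next
    case False
    then show ?thesis using 4(2)[OF ln(2)[unfolded n_def]] ln ns ga
      by (simp add: n_def[symmetric] min_def)
  qed
qed

lemma substl_leaves_gen: "(\<And>t. t \<in> set ts \<Longrightarrow> subst t (map Leaf (leaf_cols t)) = t) \<Longrightarrow>
   substl ts (map Leaf (concat (map leaf_cols ts))) = ts"
  by (induction ts) (auto simp: nleaves_def)

lemma subst_leaves: "subst A (map Leaf (leaf_cols A)) = A"
proof (induction A)
  case (Leaf x) then show ?case by simp
next
  case (Node g ts) then show ?case using substl_leaves_gen[of ts] by simp
qed

lemma substl_replicate: "length ts = n \<Longrightarrow> substl (replicate n (Leaf c)) ts = ts"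
proof (induction n arbitrary: ts)
  case 0 then show ?case by simp
next
  case (Suc n)
  then obtain u us where "ts = u # us" by (cases ts) auto
  with Suc show ?case by (simp add: nleaves_def)
qed

fun relab :: "('a \<Rightarrow> 'b) \<Rightarrow> 'a stree \<Rightarrow> 'b stree" where
  "relab h (Leaf c) = Leaf 1"
| "relab h (Node g ts) = Node (h g) (map (relab h) ts)"

lemma forget_relab: "forget t = relab id t"
  by (induction t) auto

lemma leaf_cols_relab: "leaf_cols (relab h t) = replicate (nleaves t) 1"
proof (induction t)
  case (Leaf x) then show ?case by (simp add: nleaves_def)
next
  case (Node g ts)
  then have "concat (map leaf_cols (map (relab h) ts)) = replicate (nl ts) 1"
    by (induction ts) (auto simp: nleaves_def replicate_add[symmetric])
  then show ?case by (simp add: nleaves_def)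
qed

lemma nleaves_relab[simp]: "nleaves (relab h t) = nleaves t"
  using leaf_cols_relab[of h t] by (metis length_replicate nleaves_def)

lemma relab_graft:
  shows "relab h (graft t i s) = graft (relab h t) i (relab h s)"
    and "map (relab h) (graft_list ts i s) = graft_list (map (relab h) ts) i (relab h s)"
  by (induction t i s and ts i s rule: graft_graft_list.induct) auto

lemma relab_subst:
  shows "relab h (subst t us) = subst (relab h t) (map (relab h) us)"
    and "map (relab h) (substl ts us) = substl (map (relab h) ts) (map (relab h) us)"
  by (induction t us and ts us rule: subst_substl.induct) (auto simp: take_map drop_map hd_map)




lemma valid_graft:
  shows "valid_tree k G arG outG inG t \<Longrightarrow> valid_tree k G arG outG inG s \<Longrightarrow> 1 \<le> i \<Longrightarrow> i \<le> nleaves t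
     \<Longrightarrow> leaf_cols t ! (i - 1) = tout outG s
     \<Longrightarrow> valid_tree k G arG outG inG (graft t i s) \<and> tout outG (graft t i s) = tout outG t"
    and "(\<forall>t\<in>set ts. valid_tree k G arG outG inG t) \<Longrightarrow> valid_tree k G arG outG inG s \<Longrightarrow> 1 \<le> i \<Longrightarrow> i \<le> nl ts
     \<Longrightarrow> concat (map leaf_cols ts) ! (i - 1) = tout outG s
     \<Longrightarrow> (\<forall>t\<in>set (graft_list ts i s). valid_tree k G arG outG inG t)
        \<and> map (tout outG) (graft_list ts i s) = map (tout outG) ts"
proof (induction t i s and ts i s rule: graft_graft_list.induct)
  case (1 c i T) then show ?case by (auto simp: nleaves_def)
next
  case (2 g ts i T)
  then have h: "(\<forall>t\<in>set (graft_list ts i T). valid_tree k G arG outG inG t)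
        \<and> map (tout outG) (graft_list ts i T) = map (tout outG) ts"
    by (auto simp: nleaves_def)
  have "\<forall>j<length ts. tout outG (graft_list ts i T ! j) = tout outG (ts ! j)"
    using h by (metis length_graft_list nth_map)
  then show ?case using 2(2) h by auto
next
  case (3 i T) then show ?case by simp
next
  case (4 t ts i T)
  show ?case
  proof (cases "i \<le> nleaves t")
    case True
    then have "i - 1 < length (leaf_cols t)" using 4(5) by (simp add: nleaves_def)
    then have "leaf_cols t ! (i - 1) = tout outG T"
      using 4(7) by (simp add: nth_append)
    then show ?thesis using 4 True by auto
  next
    case False
    then have "\<not> i - 1 < length (leaf_cols t)" using 4(5) by (simp add: nleaves_def)
    then have "concat (map leaf_cols ts) ! (i - 1 - length (leaf_cols t)) = tout outG T"
      using 4(7) by (simp add: nth_append)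
    then have "concat (map leaf_cols ts) ! (i - nleaves t - 1) = tout outG T"
      by (simp add: nleaves_def)
    moreover have "1 \<le> i - nleaves t" "i - nleaves t \<le> nl ts" using False 4(6) by (auto simp: nleaves_def)
    ultimately have r: "(\<forall>t\<in>set (graft_list ts (i - nleaves t) T). valid_tree k G arG outG inG t)
        \<and> map (tout outG) (graft_list ts (i - nleaves t) T) = map (tout outG) ts"
      apply -
      apply (rule 4(2)[OF False])
      using 4(3,4) by auto
    show ?thesis using r False 4(3) by simp
  qed
qed

lemma comp_defined_free:
  "comp_defined (free_op G arG outG inG k) x i y \<longleftrightarrow>
     valid_tree k G arG outG inG x \<and> valid_tree k G arG outG inG y \<and> 1 \<le> i \<and> i \<le> nleaves x
     \<and> leaf_cols x ! (i - 1) = tout outG y"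
  by (auto simp: comp_defined_def free_op_def)

abbreviation valid1 :: "'g set \<Rightarrow> ('g \<Rightarrow> nat) \<Rightarrow> 'g stree \<Rightarrow> bool" where
  "valid1 G arG t \<equiv> valid_tree 1 G arG (\<lambda>_. 1) (\<lambda>_ _. 1) t"

lemma tout1_relab[simp]: "tout (\<lambda>_. 1) (relab h t) = 1" "tout (\<lambda>_. Suc 0) (relab h t) = Suc 0"
  by (cases t, auto)+

lemma valid1_set_lc: "valid1 G arG t \<Longrightarrow> set (leaf_cols t) \<subseteq> {1}"
  by (induction t) auto

lemma valid1_lc: "valid1 G arG t \<Longrightarrow> leaf_cols t = replicate (nleaves t) 1"
  unfolding nleaves_def using valid1_set_lc[of G arG t]
  by (metis replicate_length_same singletonD subset_eq)

lemma valid1_tout: "valid1 G arG t \<Longrightarrow> tout (\<lambda>_. 1) t = 1"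
  by (cases t) auto

lemma comp_defined_free1:
  "comp_defined (free_op G arG (\<lambda>_. 1) (\<lambda>_ _. 1) 1) x i y \<longleftrightarrow>
     valid1 G arG x \<and> valid1 G arG y \<and> 1 \<le> i \<and> i \<le> nleaves x"
  unfolding comp_defined_free using valid1_lc[of G arG x] valid1_tout[of G arG y]
  by auto

lemma valid_relab:
  assumes "\<And>g. g \<in> G \<Longrightarrow> h g \<in> G' \<and> arG' (h g) = arG g"
  shows "valid_tree k G arG outG inG t \<Longrightarrow> valid1 G' arG' (relab h t)"
proof (induction t)
  case (Leaf x) then show ?case by simp
next
  case (Node g ts) then show ?case using assms by auto
qed

lemma valid_subst:
  shows "valid1 G arG A \<Longrightarrow> length us = nleaves A \<Longrightarrow> (\<forall>u\<in>set us. valid1 G arG u)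
     \<Longrightarrow> valid1 G arG (subst A us)"
    and "(\<forall>t\<in>set ts. valid1 G arG t) \<Longrightarrow> length us = nl ts \<Longrightarrow> (\<forall>u\<in>set us. valid1 G arG u)
     \<Longrightarrow> (\<forall>t\<in>set (substl ts us). valid1 G arG t) \<and> length (substl ts us) = length ts"
proof (induction A us and ts us rule: subst_substl.induct)
  case (1 c us)
  then obtain u where "us = [u]" by (cases us) (auto simp: nleaves_def)
  then show ?case using 1 by simp
next
  case (2 g ts us)
  then have "(\<forall>t\<in>set (substl ts us). valid1 G arG t) \<and> length (substl ts us) = length ts"
    by (auto simp: nleaves_def)
  moreover have "\<And>j. j < length (substl ts us) \<Longrightarrow> tout (\<lambda>_. 1) (substl ts us ! j) = 1"
    using calculation by (metis nth_mem valid1_tout)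
  ultimately show ?case using 2 by auto
next
  case (3 us) then show ?case by simp
next
  case (4 t ts us)
  have "length (take (nleaves t) us) = nleaves t" "length (drop (nleaves t) us) = nl ts"
    using 4(4) by (auto simp: nleaves_def)
  moreover have "\<forall>u\<in>set (take (nleaves t) us). valid1 G arG u" "\<forall>u\<in>set (drop (nleaves t) us). valid1 G arG u"
    using 4(5) by (auto dest: in_set_takeD in_set_dropD)
  ultimately show ?case using 4 by auto
qed

lemma nl_ge_length: "(\<And>t. t \<in> set ts \<Longrightarrow> 1 \<le> nleaves t) \<Longrightarrow> length ts \<le> nl ts"
proof (induction ts)
  case Nil then show ?case by simp
next
  case (Cons a ts)
  then have "1 \<le> nleaves a" "length ts \<le> nl ts" by auto
  then show ?case by (simp add: nleaves_def)
qed

lemma valid_nleaves: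
  assumes "\<And>g. g \<in> G \<Longrightarrow> 2 \<le> arG g"
  shows "valid_tree k G arG outG inG t \<Longrightarrow> 1 \<le> nleaves t \<and> (\<forall>g ts. t = Node g ts \<longrightarrow> 2 \<le> nleaves t)"
proof (induction t)
  case (Leaf x) then show ?case by (simp add: nleaves_def)
next
  case (Node g ts)
  then have "length ts \<le> nl ts" by (intro nl_ge_length) auto
  then show ?case using Node assms[of g] by (auto simp: nleaves_def)
qed

section \<open>Congruences\<close>

lemma cong_gen_least: "is_congruence Op E \<Longrightarrow> R \<subseteq> E \<Longrightarrow> cong_gen Op R \<subseteq> E"
  unfolding cong_gen_def by blast

lemma cong_gen_incl: "R \<subseteq> cong_gen Op R"
  unfolding cong_gen_def by blast

lemma mem_cong_gen: "(x, y) \<in> cong_gen Op R \<longleftrightarrow> (\<forall>E. is_congruence Op E \<and> R \<subseteq> E \<longrightarrow> (x, y) \<in> E)"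
  by (simp add: cong_gen_def)

lemma congD:
  assumes "is_congruence Op E"
  shows "equiv (elems Op) E"
    and "(x,y) \<in> E \<Longrightarrow> ar Op x = ar Op y"
    and "(x,y) \<in> E \<Longrightarrow> outc Op x = outc Op y"
    and "(x,y) \<in> E \<Longrightarrow> i \<in> {1..ar Op x} \<Longrightarrow> inc Op x i = inc Op y i"
    and "(x,x') \<in> E \<Longrightarrow> (y,y') \<in> E \<Longrightarrow> comp_defined Op x i y \<Longrightarrow> (pcomp Op x i y, pcomp Op x' i y') \<in> E"
  using assms unfolding is_congruence_def by blast+

lemma cong_gen_cong:
  assumes E0: "is_congruence Op E0" "R \<subseteq> E0"
  shows "is_congruence Op (cong_gen Op R)"
proof -
  let ?E = "cong_gen Op R"
  have sub: "?E \<subseteq> E0" by (rule cong_gen_least[OF E0])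
  have e0: "E0 \<subseteq> elems Op \<times> elems Op"
    using equiv_type[OF congD(1)[OF E0(1)]] .
  have refl: "(x, x) \<in> ?E" if "x \<in> elems Op" for x
    unfolding mem_cong_gen
  proof (intro allI impI)
    fix E assume "is_congruence Op E \<and> R \<subseteq> E"
    then have "equiv (elems Op) E" by (intro congD(1)) simp
    then show "(x, x) \<in> E" using that unfolding equiv_def refl_on_def by blast
  qed
  have "sym ?E"
  proof (rule symI)
    fix x y assume xy: "(x, y) \<in> ?E"
    show "(y, x) \<in> ?E" unfolding mem_cong_gen
    proof (intro allI impI)
      fix E assume h: "is_congruence Op E \<and> R \<subseteq> E"
      then have "(x, y) \<in> E" using xy h unfolding mem_cong_gen by blast
      moreover have "sym E" using h congD(1)[of Op E] unfolding equiv_def by blast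
      ultimately show "(y, x) \<in> E" by (simp add: sym_def)
    qed
  qed
  moreover have "trans ?E"
  proof (rule transI)
    fix x y z assume xy: "(x, y) \<in> ?E" and yz: "(y, z) \<in> ?E"
    show "(x, z) \<in> ?E" unfolding mem_cong_gen
    proof (intro allI impI)
      fix E assume h: "is_congruence Op E \<and> R \<subseteq> E"
      then have "(x, y) \<in> E" "(y, z) \<in> E" using xy yz h unfolding mem_cong_gen by blast+
      moreover have "trans E" using h congD(1)[of Op E] unfolding equiv_def by blast
      ultimately show "(x, z) \<in> E" by (meson transD)
    qed
  qed
  ultimately have "equiv (elems Op) ?E"
    using sub e0 refl by (auto simp: equiv_def refl_on_def)
  moreover have "\<forall>(x,y)\<in>?E. ar Op x = ar Op y \<and> outc Op x = outc Op y
        \<and> (\<forall>i\<in>{1..ar Op x}. inc Op x i = inc Op y i)"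
  proof (intro ballI, clarify)
    fix x y assume "(x, y) \<in> ?E"
    then have "(x, y) \<in> E0" using sub by blast
    then show "ar Op x = ar Op y \<and> outc Op x = outc Op y \<and> (\<forall>i\<in>{1..ar Op x}. inc Op x i = inc Op y i)"
      using congD(2-4)[OF E0(1)] by blast
  qed
  moreover have "\<forall>x x' y y' i. (x,x') \<in> ?E \<longrightarrow> (y,y') \<in> ?E \<longrightarrow> comp_defined Op x i y \<longrightarrow>
        (pcomp Op x i y, pcomp Op x' i y') \<in> ?E"
  proof (intro allI impI)
    fix x x' y y' i assume a: "(x,x') \<in> ?E" "(y,y') \<in> ?E" "comp_defined Op x i y"
    show "(pcomp Op x i y, pcomp Op x' i y') \<in> ?E" unfolding mem_cong_gen
    proof (intro allI impI)
      fix E assume h: "is_congruence Op E \<and> R \<subseteq> E"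
      then have "(x, x') \<in> E" "(y, y') \<in> E" using a h unfolding mem_cong_gen by blast+
      then show "(pcomp Op x i y, pcomp Op x' i y') \<in> E" using congD(5)[of Op E] h a(3) by blast
    qed
  qed
  ultimately show ?thesis unfolding is_congruence_def by blast
qed

section \<open>Quotients\<close>

lemma quot_some:
  assumes "equiv A E" "X \<in> A // E"
  shows "(SOME x. x \<in> X) \<in> X" "X = E `` {SOME x. x \<in> X}" "(SOME x. x \<in> X) \<in> A"
proof -
  obtain a where a: "a \<in> A" "X = E `` {a}" using assms(2) by (rule quotientE)
  then have "a \<in> X" using equiv_class_self[OF assms(1)] by blast
  then show s: "(SOME x. x \<in> X) \<in> X" by (rule someI)
  then show "X = E `` {SOME x. x \<in> X}" using a assms(1)
    by (metis Image_singleton_iff equiv_class_eq)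
  show "(SOME x. x \<in> X) \<in> A" using s a assms(1) equiv_type by fastforce
qed

lemma quot_some_rel:
  assumes "equiv A E" "a \<in> A"
  shows "(a, SOME x. x \<in> E `` {a}) \<in> E"
proof -
  have "E `` {a} \<in> A // E" using assms(2) by (rule quotientI)
  from quot_some(1)[OF assms(1) this] show ?thesis by simp
qed

lemma quot_ar:
  assumes "is_congruence Op E" "a \<in> elems Op"
  shows "ar (quot_op Op E) (E `` {a}) = ar Op a"
    and "outc (quot_op Op E) (E `` {a}) = outc Op a"
    and "i \<in> {1..ar Op a} \<Longrightarrow> inc (quot_op Op E) (E `` {a}) i = inc Op a i"
proof -
  have r: "(a, SOME x. x \<in> E `` {a}) \<in> E" using quot_some_rel[OF congD(1)[OF assms(1)] assms(2)] .
  show "ar (quot_op Op E) (E `` {a}) = ar Op a" using congD(2)[OF assms(1) r] by (simp add: quot_op_def)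
  show "outc (quot_op Op E) (E `` {a}) = outc Op a" using congD(3)[OF assms(1) r] by (simp add: quot_op_def)
  show "i \<in> {1..ar Op a} \<Longrightarrow> inc (quot_op Op E) (E `` {a}) i = inc Op a i"
    using congD(4)[OF assms(1) r] by (simp add: quot_op_def)
qed

lemma quot_pcomp:
  assumes "is_congruence Op E" "comp_defined Op a i b"
  shows "pcomp (quot_op Op E) (E `` {a}) i (E `` {b}) = E `` {pcomp Op a i b}"
proof -
  have ab: "a \<in> elems Op" "b \<in> elems Op" using assms(2) by (auto simp: comp_defined_def)
  have eq: "equiv (elems Op) E" using congD(1)[OF assms(1)] .
  have r1: "(a, SOME x. x \<in> E `` {a}) \<in> E" using quot_some_rel[OF eq ab(1)] .
  have r2: "(b, SOME x. x \<in> E `` {b}) \<in> E" using quot_some_rel[OF eq ab(2)] .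
  have "(pcomp Op a i b, pcomp Op (SOME x. x \<in> E `` {a}) i (SOME x. x \<in> E `` {b})) \<in> E"
    using congD(5)[OF assms(1) r1 r2 assms(2)] .
  then have "E `` {pcomp Op a i b} = E `` {pcomp Op (SOME x. x \<in> E `` {a}) i (SOME x. x \<in> E `` {b})}"
    using eq equiv_class_eq by metis
  then show ?thesis by (simp add: quot_op_def)
qed

lemma profile_cong:
  "is_congruence (free_op G arG outG inG k)
     {(a,b). valid_tree k G arG outG inG a \<and> valid_tree k G arG outG inG b
        \<and> leaf_cols a = leaf_cols b \<and> tout outG a = tout outG b}"
  (is "is_congruence ?F ?P")
proof -
  have "equiv (elems ?F) ?P"
    by (auto simp: equiv_def refl_on_def sym_def trans_def free_op_def)
  moreover have "\<forall>(x,y)\<in>?P. ar ?F x = ar ?F y \<and> outc ?F x = outc ?F y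
        \<and> (\<forall>i\<in>{1..ar ?F x}. inc ?F x i = inc ?F y i)"
    by (auto simp: free_op_def nleaves_def)
  moreover have "\<forall>x x' y y' i. (x,x') \<in> ?P \<longrightarrow> (y,y') \<in> ?P \<longrightarrow> comp_defined ?F x i y \<longrightarrow>
        (pcomp ?F x i y, pcomp ?F x' i y') \<in> ?P"
  proof (intro allI impI)
    fix x x' y y' i
    assume a: "(x,x') \<in> ?P" "(y,y') \<in> ?P" "comp_defined ?F x i y"
    then have c: "valid_tree k G arG outG inG x" "valid_tree k G arG outG inG y" "1 \<le> i" "i \<le> nleaves x"
      "leaf_cols x ! (i - 1) = tout outG y"
      by (auto simp only: comp_defined_free)
    have c': "valid_tree k G arG outG inG x'" "valid_tree k G arG outG inG y'" "i \<le> nleaves x'"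
      "leaf_cols x' ! (i - 1) = tout outG y'"
      using a c by (auto simp: nleaves_def)
    have g1: "valid_tree k G arG outG inG (graft x i y) \<and> tout outG (graft x i y) = tout outG x"
      using valid_graft(1)[OF c] .
    have g2: "valid_tree k G arG outG inG (graft x' i y') \<and> tout outG (graft x' i y') = tout outG x'"
      using valid_graft(1)[OF c'(1,2) c(3) c'(3,4)] .
    have "leaf_cols (graft x i y) = leaf_cols (graft x' i y')"
      using c c' a by (simp add: leaf_cols_graft)
    then show "(pcomp ?F x i y, pcomp ?F x' i y') \<in> ?P"
      using g1 g2 a by (simp add: free_op_def)
  qed
  ultimately show ?thesis unfolding is_congruence_def by blast
qed




lemma subst_step:
  assumes "length us = nleaves A" "j < length us"
  shows "subst A (take j us @ us ! j # replicate (nleaves A - Suc j) (Leaf 1)) =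
    graft (subst A (take j us @ Leaf 1 # replicate (nleaves A - Suc j) (Leaf 1))) (nl (take j us) + 1) (us ! j)"
proof -
  let ?ws = "take j us @ Leaf 1 # replicate (nleaves A - Suc j) (Leaf 1)"
  have l: "length ?ws = nleaves A" using assms by simp
  have "graft_list ?ws (nl (take j us) + 1) (us ! j) = take j us @ us ! j # replicate (nleaves A - Suc j) (Leaf 1)"
    by (simp add: graft_list_append nleaves_def)
  then show ?thesis using graft_subst(1)[OF l] by simp
qed

lemma list_all2_nl:
  assumes "list_all2 (\<lambda>u v. nleaves u = nleaves v) us vs"
  shows "nl us = nl vs"
  using assms by (induction rule: list_all2_induct) (auto simp: nleaves_def)

lemma subst_cong:
  fixes G :: "'g set" and arG :: "'g \<Rightarrow> nat"
  defines "F1 \<equiv> free_op G arG (\<lambda>_. 1) (\<lambda>_ _. 1) 1"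
  assumes E: "is_congruence F1 E" and AB: "(A, B) \<in> E" and len: "length us = nleaves A"
    and uv: "list_all2 (\<lambda>u v. (u, v) \<in> E) us vs"
  shows "(subst A us, subst B vs) \<in> E"
proof -
  have sub: "E \<subseteq> elems F1 \<times> elems F1" using congD(1)[OF E] equiv_type by blast
  have vel: "\<And>x y. (x, y) \<in> E \<Longrightarrow> valid1 G arG x \<and> valid1 G arG y" using sub by (auto simp: F1_def free_op_def)
  have nlE: "\<And>x y. (x, y) \<in> E \<Longrightarrow> nleaves x = nleaves y" using congD(2)[OF E] by (simp add: F1_def free_op_def)
  define n where "n = nleaves A"
  have nB: "nleaves B = n" using nlE[OF AB] n_def by simp
  have lv: "length vs = n" using list_all2_lengthD[OF uv] len n_def by simp
  have vA: "valid1 G arG A" and vB: "valid1 G arG B" using vel[OF AB] by auto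
  have vus: "\<forall>u\<in>set us. valid1 G arG u"
  proof
    fix u assume "u \<in> set us"
    then obtain i where i: "i < length us" "us ! i = u" by (auto simp: in_set_conv_nth)
    then have "(us ! i, vs ! i) \<in> E" using list_all2_nthD[OF uv] by blast
    then show "valid1 G arG u" using vel i by blast
  qed
  have main: "j \<le> n \<Longrightarrow> (subst A (take j us @ replicate (n - j) (Leaf 1)),
                        subst B (take j vs @ replicate (n - j) (Leaf 1))) \<in> E" for j
  proof (induction j)
    case 0
    have "subst A (replicate n (Leaf 1)) = A"
      using subst_leaves[of A] valid1_lc[OF vA] by (simp add: n_def)
    moreover have "subst B (replicate n (Leaf 1)) = B"
      using subst_leaves[of B] valid1_lc[OF vB] by (simp add: nB)
    ultimately show ?case using AB by simp
  next
    case (Suc j)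
    then have jn: "j < n" by simp
    have rep: "replicate (n - j) (Leaf 1) = Leaf (1::nat) # replicate (n - Suc j) (Leaf 1)"
    proof -
      have "n - j = Suc (n - Suc j)" using jn by simp
      then show ?thesis by (simp only: replicate_Suc)
    qed
    have IH: "(subst A (take j us @ Leaf 1 # replicate (n - Suc j) (Leaf 1)),
               subst B (take j vs @ Leaf 1 # replicate (n - Suc j) (Leaf 1))) \<in> E"
    proof -
      have "(subst A (take j us @ replicate (n - j) (Leaf 1)),
             subst B (take j vs @ replicate (n - j) (Leaf 1))) \<in> E" using Suc.IH jn by simp
      then show ?thesis by (simp only: rep)
    qed
    have ujv: "(us ! j, vs ! j) \<in> E" using list_all2_nthD[OF uv] jn len n_def by simp
    have uv2: "list_all2 (\<lambda>u v. nleaves u = nleaves v) us vs"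
      by (rule list_all2_mono[OF uv]) (rule nlE)
    have nleq: "nl (take j us) = nl (take j vs)"
      by (rule list_all2_nl[OF list_all2_takeI[OF uv2]])
    have sA: "subst A (take (Suc j) us @ replicate (n - Suc j) (Leaf 1)) =
        graft (subst A (take j us @ Leaf 1 # replicate (n - Suc j) (Leaf 1))) (nl (take j us) + 1) (us ! j)"
      using subst_step[of us A j] len jn n_def by (simp add: take_Suc_conv_app_nth)
    have sB: "subst B (take (Suc j) vs @ replicate (n - Suc j) (Leaf 1)) =
        graft (subst B (take j vs @ Leaf 1 # replicate (n - Suc j) (Leaf 1))) (nl (take j vs) + 1) (vs ! j)"
      using subst_step[of vs B j] lv jn nB by (simp add: take_Suc_conv_app_nth)
    let ?X = "subst A (take j us @ Leaf 1 # replicate (n - Suc j) (Leaf 1))"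
    have vX: "valid1 G arG ?X"
      apply (rule valid_subst(1)[OF vA])
      using len jn n_def vus by (auto dest: in_set_takeD)
    have nX: "nleaves ?X = nl (take j us) + 1 + (n - Suc j)"
      using nleaves_subst[of "take j us @ Leaf 1 # replicate (n - Suc j) (Leaf 1)" A] len jn n_def
      by (simp add: nleaves_def)
    have vu: "valid1 G arG (us ! j)" using vus jn len n_def by simp
    have cd: "comp_defined F1 ?X (nl (take j us) + 1) (us ! j)"
      unfolding F1_def comp_defined_free1 using vX vu nX by simp
    have "(pcomp F1 ?X (nl (take j us) + 1) (us ! j),
           pcomp F1 (subst B (take j vs @ Leaf 1 # replicate (n - Suc j) (Leaf 1))) (nl (take j us) + 1) (vs ! j)) \<in> E"
      by (rule congD(5)[OF E IH ujv cd])
    then show ?case using sA sB nleq by (simp add: F1_def free_op_def)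
  qed
  from main[of n] show ?thesis using len lv n_def by simp
qed




fun psi :: "('a \<Rightarrow> 'g stree) \<Rightarrow> 'a stree \<Rightarrow> 'g stree" where
  "psi \<rho> (Leaf c) = Leaf 1"
| "psi \<rho> (Node x ts) = subst (forget (\<rho> x)) (map (psi \<rho>) ts)"

lemma relab_relab: "relab h (relab g t) = relab (h \<circ> g) t"
  by (induction t) auto

lemma psi_props:
  assumes H: "\<And>x. x \<in> Gx \<Longrightarrow> valid1 G arG (forget (\<rho> x)) \<and> nleaves (\<rho> x) = arx x"
  shows "valid1 Gx arx t \<Longrightarrow> valid1 G arG (psi \<rho> t) \<and> nleaves (psi \<rho> t) = nleaves t"
proof (induction t)
  case (Leaf c) then show ?case by (simp add: nleaves_def)
next
  case (Node x ts)
  then have v: "\<forall>t\<in>set ts. valid1 G arG (psi \<rho> t) \<and> nleaves (psi \<rho> t) = nleaves t" by auto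
  have nlm: "nl (map (psi \<rho>) ts) = nl ts"
    using v by (induction ts) (auto simp: nleaves_def)
  have hx: "valid1 G arG (forget (\<rho> x))" "nleaves (\<rho> x) = arx x" using H Node by auto
  have l: "length (map (psi \<rho>) ts) = nleaves (forget (\<rho> x))"
    using hx Node by (simp add: forget_relab)
  show ?case
    using valid_subst(1)[OF hx(1) l] nleaves_subst[OF l] v nlm by (auto simp: nleaves_def)
qed

lemma psi_graft:
  assumes H: "\<And>x. x \<in> Gx \<Longrightarrow> valid1 G arG (forget (\<rho> x)) \<and> nleaves (\<rho> x) = arx x"
  shows "valid1 Gx arx t \<Longrightarrow> psi \<rho> (graft t i s) = graft (psi \<rho> t) i (psi \<rho> s)"
proof (induction t arbitrary: i)
  case (Leaf c) then show ?case by simp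
next
  case (Node x ts)
  have IH: "\<forall>t\<in>set ts. valid1 Gx arx t \<and> (\<forall>i. psi \<rho> (graft t i s) = graft (psi \<rho> t) i (psi \<rho> s))"
    using Node by auto
  have ml: "map (psi \<rho>) (graft_list ts i s) = graft_list (map (psi \<rho>) ts) i (psi \<rho> s)"
    using IH
  proof (induction ts arbitrary: i)
    case Nil then show ?case by simp
  next
    case (Cons t ts)
    have "nleaves (psi \<rho> t) = nleaves t" using psi_props[where Gx=Gx and G=G and arG=arG and \<rho>=\<rho> and arx=arx, OF H] Cons.prems by auto
    then show ?case using Cons by auto
  qed
  have hx: "nleaves (\<rho> x) = arx x" using H Node by auto
  have l: "length (map (psi \<rho>) ts) = nleaves (forget (\<rho> x))"
    using hx Node by (simp add: forget_relab)
  show ?case using graft_subst(1)[OF l] ml by simp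
qed




locale envs =
  fixes k :: nat and C :: "'a coloperad" and G :: "'g set" and arG :: "'g \<Rightarrow> nat"
    and outG :: "'g \<Rightarrow> nat" and inG :: "'g \<Rightarrow> nat \<Rightarrow> nat" and R :: "'g stree rel"
    and f0 :: "'a \<Rightarrow> 'g stree set"
  assumes Cop: "is_coloperad k C"
    and coll: "is_collection k G arG outG inG"
    and Rsub: "R \<subseteq> elems (free_op G arG outG inG k) \<times> elems (free_op G arG outG inG k)"
    and Rprof: "\<forall>(S,T)\<in>R. ar (free_op G arG outG inG k) S = ar (free_op G arG outG inG k) T
          \<and> outc (free_op G arG outG inG k) S = outc (free_op G arG outG inG k) T
          \<and> (\<forall>i\<in>{1..ar (free_op G arG outG inG k) S}.
               inc (free_op G arG outG inG k) S i = inc (free_op G arG outG inG k) T i)"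
    and iso: "is_iso k C (quot_op (free_op G arG outG inG k) (cong_gen (free_op G arG outG inG k) R)) f0"
begin

abbreviation "F \<equiv> free_op G arG outG inG k"
abbreviation "F' \<equiv> free_op G arG (\<lambda>_. 1) (\<lambda>_ _. 1) 1"
abbreviation "R' \<equiv> {(forget S, forget T) | S T. (S, T) \<in> R}"
abbreviation "E \<equiv> cong_gen F R"
abbreviation "E' \<equiv> cong_gen F' R'"
abbreviation "vF \<equiv> valid_tree k G arG outG inG"

lemma arG2: "g \<in> G \<Longrightarrow> 2 \<le> arG g"
  using coll unfolding is_collection_def by auto

lemma vF_nleaves: "vF t \<Longrightarrow> 1 \<le> nleaves t" "vF (Node g ts) \<Longrightarrow> 2 \<le> nleaves (Node g ts)"
  using valid_nleaves[of G arG, OF arG2] by blast+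

lemma forget_valid: "vF t \<Longrightarrow> valid1 G arG (forget t)"
  unfolding forget_relab by (rule valid_relab) auto

lemma forget_valid'[simp]: "vF t \<Longrightarrow> valid_tree (Suc 0) G arG (\<lambda>_. Suc 0) (\<lambda>_ _. Suc 0) (forget t)"
  using forget_valid by simp

lemma tout_forget[simp]: "tout (\<lambda>_. 1) (forget t) = 1" "tout (\<lambda>_. Suc 0) (forget t) = Suc 0"
  by (cases t, auto)+

lemma lc_forget: "leaf_cols (forget t) = replicate (nleaves t) 1"
  unfolding forget_relab by (rule leaf_cols_relab)

lemma nleaves_forget[simp]: "nleaves (forget t) = nleaves t"
  unfolding forget_relab by simp

lemma forget_graft: "forget (graft t i s) = graft (forget t) i (forget s)"
  unfolding forget_relab by (rule relab_graft)

lemma E'_cong: "is_congruence F' E'"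
proof (rule cong_gen_cong[OF profile_cong])
  show "R' \<subseteq> {(a, b). valid1 G arG a \<and> valid1 G arG b \<and> leaf_cols a = leaf_cols b
        \<and> tout (\<lambda>_. 1) a = tout (\<lambda>_. 1) b}"
  proof safe
    fix S T assume "(S, T) \<in> R"
    then have "vF S" "vF T" "nleaves S = nleaves T"
      using Rsub Rprof by (auto simp: free_op_def)
    then show "valid1 G arG (forget S)" "valid1 G arG (forget T)"
      "leaf_cols (forget S) = leaf_cols (forget T)" "tout (\<lambda>_. 1) (forget S) = tout (\<lambda>_. 1) (forget T)"
      by (simp_all add: forget_valid lc_forget)
  qed
qed

lemma E'_props:
  "(a, b) \<in> E' \<Longrightarrow> valid1 G arG a \<and> valid1 G arG b \<and> nleaves a = nleaves b"
  using congD(1,2)[OF E'_cong] equiv_type by (fastforce simp: free_op_def)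

definition K :: "'g stree rel" where
  "K = {(S, T). vF S \<and> vF T \<and> leaf_cols S = leaf_cols T \<and> tout outG S = tout outG T
          \<and> (forget S, forget T) \<in> E'}"

lemma K_cong: "is_congruence F K"
proof -
  let ?P = "{(a,b). vF a \<and> vF b \<and> leaf_cols a = leaf_cols b \<and> tout outG a = tout outG b}"
  have P: "is_congruence F ?P" by (rule profile_cong)
  have eq': "equiv (elems F') E'" by (rule congD(1)[OF E'_cong])
  have "equiv (elems F) K"
  proof (rule equivI)
    show "K \<subseteq> elems F \<times> elems F" by (auto simp: K_def free_op_def)
    show "refl_on (elems F) K"
    proof (rule refl_onI)
      fix S assume "S \<in> elems F"
      then have v: "vF S" by (simp add: free_op_def)
      then have "forget S \<in> elems F'" by (simp add: free_op_def forget_valid)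
      then have "(forget S, forget S) \<in> E'" using eq' by (meson equiv_def refl_onD)
      then show "(S, S) \<in> K" using v by (simp add: K_def)
    qed
    show "sym K"
    proof (rule symI)
      fix S T assume st: "(S, T) \<in> K"
      then have "(forget S, forget T) \<in> E'" by (simp add: K_def)
      then have "(forget T, forget S) \<in> E'" using eq' by (meson equiv_def symD)
      then show "(T, S) \<in> K" using st by (simp add: K_def)
    qed
    show "trans K"
    proof (rule transI)
      fix S T U assume st: "(S, T) \<in> K" and tu: "(T, U) \<in> K"
      then have "(forget S, forget T) \<in> E'" "(forget T, forget U) \<in> E'" by (simp_all add: K_def)
      then have "(forget S, forget U) \<in> E'" using eq' by (meson equiv_def transD)
      then show "(S, U) \<in> K" using st tu by (simp add: K_def)
    qed
  qed
  moreover have "\<forall>(x,y)\<in>K. ar F x = ar F y \<and> outc F x = outc F y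
        \<and> (\<forall>i\<in>{1..ar F x}. inc F x i = inc F y i)"
    by (auto simp: K_def free_op_def nleaves_def)
  moreover have "\<forall>x x' y y' i. (x,x') \<in> K \<longrightarrow> (y,y') \<in> K \<longrightarrow> comp_defined F x i y \<longrightarrow>
        (pcomp F x i y, pcomp F x' i y') \<in> K"
  proof (intro allI impI)
    fix x x' y y' i
    assume a: "(x,x') \<in> K" "(y,y') \<in> K" "comp_defined F x i y"
    have p1: "(x,x') \<in> ?P" "(y,y') \<in> ?P" using a by (auto simp: K_def)
    have "(pcomp F x i y, pcomp F x' i y') \<in> ?P" by (rule congD(5)[OF P p1 a(3)])
    moreover have "(forget (graft x i y), forget (graft x' i y')) \<in> E'"
    proof -
      have f: "(forget x, forget x') \<in> E'" "(forget y, forget y') \<in> E'" using a by (auto simp: K_def)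
      have c: "vF x" "vF y" "1 \<le> i" "i \<le> nleaves x" using a(3) by (auto simp only: comp_defined_free)
      have "comp_defined F' (forget x) i (forget y)"
        unfolding comp_defined_free1 using c by (simp add: forget_valid)
      from congD(5)[OF E'_cong f this] show ?thesis by (simp add: forget_graft free_op_def)
    qed
    ultimately show "(pcomp F x i y, pcomp F x' i y') \<in> K" by (auto simp: K_def free_op_def)
  qed
  ultimately show ?thesis unfolding is_congruence_def by blast
qed

lemma R_K: "R \<subseteq> K"
proof safe
  fix S T assume st: "(S, T) \<in> R"
  then have "vF S" "vF T" using Rsub by (auto simp: free_op_def)
  moreover have hh: "nleaves S = nleaves T" "tout outG S = tout outG T"
    "\<forall>i\<in>{1..nleaves S}. leaf_cols S ! (i - 1) = leaf_cols T ! (i - 1)"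
    using Rprof st by (auto simp: free_op_def)
  then have "leaf_cols S = leaf_cols T"
  proof (intro nth_equalityI)
    assume h: "nleaves S = nleaves T" "tout outG S = tout outG T"
      "\<forall>i\<in>{1..nleaves S}. leaf_cols S ! (i - 1) = leaf_cols T ! (i - 1)"
    show "length (leaf_cols S) = length (leaf_cols T)" using h(1) by (simp add: nleaves_def)
    fix i assume "i < length (leaf_cols S)"
    then have "Suc i \<in> {1..nleaves S}" by (simp add: nleaves_def)
    then have "leaf_cols S ! (Suc i - 1) = leaf_cols T ! (Suc i - 1)" using h(3) by blast
    then show "leaf_cols S ! i = leaf_cols T ! i" by simp
  qed
  moreover have "(forget S, forget T) \<in> R'" using st by blast
  then have "(forget S, forget T) \<in> E'" by (rule subsetD[OF cong_gen_incl])
  ultimately show "(S, T) \<in> K" using hh(2) by (simp add: K_def)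
qed

lemma E_cong: "is_congruence F E"
  by (rule cong_gen_cong[OF K_cong R_K])

lemma E_K: "E \<subseteq> K"
  by (rule cong_gen_least[OF K_cong R_K])

lemma E_props: "(S, T) \<in> E \<Longrightarrow> vF S \<and> vF T \<and> leaf_cols S = leaf_cols T \<and> tout outG S = tout outG T
    \<and> (forget S, forget T) \<in> E'"
  using E_K by (auto simp: K_def)

end




context envs begin

abbreviation "Q \<equiv> quot_op F E"

lemma iso_bij: "bij_betw f0 (elems C) (elems F // E)"
  using iso by (simp add: is_iso_def quot_op_def)

lemma iso_ar: "x \<in> elems C \<Longrightarrow> ar Q (f0 x) = ar C x \<and> outc Q (f0 x) = outc C x
        \<and> (\<forall>i\<in>{1..ar C x}. inc Q (f0 x) i = inc C x i)"
  using iso by (simp add: is_iso_def)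

lemma iso_comp: "comp_defined C x i y \<Longrightarrow> f0 (pcomp C x i y) = pcomp Q (f0 x) i (f0 y)"
  using iso by (simp add: is_iso_def)

lemma Eequiv: "equiv (elems F) E" by (rule congD(1)[OF E_cong])

lemma comp_C: "comp_defined C x i y \<Longrightarrow> pcomp C x i y \<in> elems C \<and> ar C (pcomp C x i y) = ar C x + ar C y - 1"
  using Cop by (simp add: is_coloperad_def)

definition rho :: "'a \<Rightarrow> 'g stree" where "rho x = (SOME t. t \<in> f0 x)"

lemma rho: assumes "x \<in> elems C" shows "rho x \<in> f0 x" "f0 x = E `` {rho x}" "vF (rho x)"
proof -
  have X: "f0 x \<in> elems F // E" using iso_bij assms bij_betwE by blast
  show "rho x \<in> f0 x" "f0 x = E `` {rho x}" using quot_some(1,2)[OF Eequiv X] by (auto simp: rho_def)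
  show "vF (rho x)" using quot_some(3)[OF Eequiv X] by (simp add: rho_def free_op_def)
qed

lemma rho_ar: assumes "x \<in> elems C"
  shows "nleaves (rho x) = ar C x" "tout outG (rho x) = outc C x"
    "i \<in> {1..ar C x} \<Longrightarrow> leaf_cols (rho x) ! (i - 1) = inc C x i"
  using iso_ar[OF assms] by (auto simp: quot_op_def free_op_def rho_def)

lemma rho_comp: assumes "comp_defined C x i y"
  shows "(graft (rho x) i (rho y), rho (pcomp C x i y)) \<in> E"
proof -
  have "pcomp C x i y \<in> elems C" using comp_C[OF assms] by simp
  then have "rho (pcomp C x i y) \<in> f0 (pcomp C x i y)" by (rule rho)
  also have "f0 (pcomp C x i y) = E `` {graft (rho x) i (rho y)}"
    using iso_comp[OF assms] by (simp add: quot_op_def free_op_def rho_def)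
  finally show ?thesis by simp
qed

definition ev :: "'g stree \<Rightarrow> 'a" where "ev S = inv_into (elems C) f0 (E `` {S})"

lemma ev: assumes "vF S" shows "ev S \<in> elems C" "f0 (ev S) = E `` {S}"
proof -
  have "E `` {S} \<in> elems F // E" using assms by (intro quotientI) (simp add: free_op_def)
  then show "ev S \<in> elems C" "f0 (ev S) = E `` {S}"
    using iso_bij unfolding ev_def
    by (auto simp: bij_betw_def inv_into_into f_inv_into_f)
qed

lemma ev_ar: assumes "vF S"
  shows "ar C (ev S) = nleaves S" "outc C (ev S) = tout outG S"
    "i \<in> {1..nleaves S} \<Longrightarrow> inc C (ev S) i = leaf_cols S ! (i - 1)"
proof -
  have S: "S \<in> elems F" using assms by (simp add: free_op_def)
  note q = quot_ar[OF E_cong S] and a = iso_ar[OF ev(1)[OF assms]]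
  show "ar C (ev S) = nleaves S" using q a ev(2)[OF assms] by (simp add: free_op_def)
  show "outc C (ev S) = tout outG S" using q a ev(2)[OF assms] by (simp add: free_op_def)
  show "i \<in> {1..nleaves S} \<Longrightarrow> inc C (ev S) i = leaf_cols S ! (i - 1)"
    using q a ev(2)[OF assms] by (simp add: free_op_def)
qed

lemma ev_rho: "x \<in> elems C \<Longrightarrow> ev (rho x) = x"
  unfolding ev_def using rho(2)[of x] iso_bij
  by (metis bij_betw_imp_inj_on inv_into_f_f)

lemma ev_eq: "(S, T) \<in> E \<Longrightarrow> ev S = ev T"
  unfolding ev_def using Eequiv equiv_class_eq by metis

lemma ev_comp: assumes "comp_defined F A p B"
  shows "comp_defined C (ev A) p (ev B)" "ev (graft A p B) = pcomp C (ev A) p (ev B)"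
proof -
  have c: "vF A" "vF B" "1 \<le> p" "p \<le> nleaves A" "leaf_cols A ! (p - 1) = tout outG B"
    using assms by (auto simp only: comp_defined_free)
  show cd: "comp_defined C (ev A) p (ev B)"
    unfolding comp_defined_def using ev[OF c(1)] ev[OF c(2)] ev_ar[OF c(1)] ev_ar[OF c(2)] c by auto
  have "f0 (pcomp C (ev A) p (ev B)) = pcomp Q (E `` {A}) p (E `` {B})"
    using iso_comp[OF cd] ev(2)[OF c(1)] ev(2)[OF c(2)] by simp
  also have "\<dots> = E `` {graft A p B}" using quot_pcomp[OF E_cong assms] by (simp add: free_op_def)
  finally have "f0 (pcomp C (ev A) p (ev B)) = E `` {graft A p B}" .
  moreover have "pcomp C (ev A) p (ev B) \<in> elems C" using comp_C[OF cd] by simp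
  ultimately show "ev (graft A p B) = pcomp C (ev A) p (ev B)"
    unfolding ev_def using iso_bij by (metis bij_betw_imp_inj_on inv_into_f_f)
qed

definition colcor :: "'g \<Rightarrow> 'g stree" where
  "colcor g = Node g (map (\<lambda>i. Leaf (inG g (Suc i))) [0..<arG g])"

lemma colcor_valid: "g \<in> G \<Longrightarrow> vF (colcor g)"
  using coll unfolding colcor_def is_collection_def by auto

lemma nl_leaves: "(\<forall>t\<in>set ts. nleaves t = 1) \<Longrightarrow> nl ts = length ts"
  by (induction ts) (auto simp: nleaves_def)

lemma nleaves_colcor: "nleaves (colcor g) = arG g"
  unfolding colcor_def nleaves_Node by (subst nl_leaves) (auto simp: nleaves_def)

definition phi :: "'g \<Rightarrow> 'a" where "phi g = ev (colcor g)"

lemma phi: "g \<in> G \<Longrightarrow> phi g \<in> Cplus C \<and> ar C (phi g) = arG g"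
  using ev[OF colcor_valid] ev_ar[OF colcor_valid] nleaves_colcor arG2
  by (auto simp: phi_def Cplus_def)

abbreviation "Fe \<equiv> env_free C"
abbreviation "Ee \<equiv> cong_gen (env_free C) (env_rel C)"
abbreviation "ve \<equiv> valid1 (Cplus C) (ar C)"

lemma Fe_def': "Fe = free_op (Cplus C) (ar C) (\<lambda>_. 1) (\<lambda>_ _. 1) 1"
  by (simp add: env_free_def)

lemma corolla_valid: "x \<in> Cplus C \<Longrightarrow> ve (corolla C x)"
  by (auto simp: corolla_def)

lemma nleaves_corolla: "nleaves (corolla C x) = ar C x"
  unfolding corolla_def nleaves_Node by (subst nl_leaves) (auto simp: nleaves_def)

lemma Cplus_comp: "x \<in> Cplus C \<Longrightarrow> y \<in> Cplus C \<Longrightarrow> comp_defined C x i y \<Longrightarrow>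
   pcomp C x i y \<in> Cplus C \<and> ar C (pcomp C x i y) = ar C x + ar C y - 1"
  using comp_C by (auto simp: Cplus_def)

lemma env_rel_valid: assumes "(a, b) \<in> env_rel C"
  shows "ve a \<and> ve b \<and> nleaves a = nleaves b"
proof -
  obtain x i y where d: "a = graft (corolla C x) i (corolla C y)" "b = corolla C (pcomp C x i y)"
    "x \<in> Cplus C" "y \<in> Cplus C" "comp_defined C x i y"
    using assms unfolding env_rel_def by blast
  have cd: "comp_defined Fe (corolla C x) i (corolla C y)"
    unfolding Fe_def' comp_defined_free1 using d corolla_valid nleaves_corolla
    by (auto simp: comp_defined_def)
  then have i: "1 \<le> i" "i \<le> nleaves (corolla C x)" unfolding Fe_def' comp_defined_free1 by auto
  have lc1: "leaf_cols (corolla C x) ! (i - 1) = tout (\<lambda>_. 1) (corolla C y)"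
    using valid1_lc[OF corolla_valid[OF d(3)]] i by (simp add: corolla_def)
  have "ve a" unfolding d(1)
    using valid_graft(1)[OF corolla_valid[OF d(3)] corolla_valid[OF d(4)] i lc1] by simp
  moreover have "ve b" using d Cplus_comp corolla_valid by auto
  moreover have "nleaves a = nleaves b"
    using d Cplus_comp[OF d(3-5)] nleaves_graft[OF i] nleaves_corolla by simp
  ultimately show ?thesis by simp
qed

lemma Ee_cong: "is_congruence Fe Ee"
  unfolding Fe_def'
proof (rule cong_gen_cong[OF profile_cong])
  show "env_rel C \<subseteq> {(a, b). ve a \<and> ve b \<and> leaf_cols a = leaf_cols b \<and> tout (\<lambda>_. 1) a = tout (\<lambda>_. 1) b}"
    using env_rel_valid valid1_lc valid1_tout by (fastforce simp: env_free_def)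
qed

lemma env_rel_Ee: "env_rel C \<subseteq> Ee" by (rule cong_gen_incl)

lemma Ee_props: "(a, b) \<in> Ee \<Longrightarrow> ve a \<and> ve b \<and> nleaves a = nleaves b"
  using congD(1,2)[OF Ee_cong] equiv_type by (fastforce simp: env_free_def free_op_def)

end




fun nnodes :: "'g stree \<Rightarrow> nat" where
  "nnodes (Leaf c) = 0"
| "nnodes (Node g ts) = Suc (sum_list (map nnodes ts))"

lemma valid1_graft:
  assumes "valid1 G arG x" "valid1 G arG y" "1 \<le> i" "i \<le> nleaves x"
  shows "valid1 G arG (graft x i y)"
proof -
  have "i - 1 < nleaves x" using assms(3,4) by simp
  then have "leaf_cols x ! (i - 1) = tout (\<lambda>_. 1) y"
    using valid1_lc[OF assms(1)] valid1_tout[OF assms(2)] by simp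
  from valid_graft(1)[OF assms(1,2,3,4) this] show ?thesis by simp
qed

context envs begin

lemma H: "x \<in> Cplus C \<Longrightarrow> valid1 G arG (forget (rho x)) \<and> nleaves (rho x) = ar C x"
  using rho(3) rho_ar(1) forget_valid by (auto simp: Cplus_def)

lemma Psi: "ve t \<Longrightarrow> valid1 G arG (psi rho t) \<and> nleaves (psi rho t) = nleaves t"
  by (rule psi_props[where Gx="Cplus C" and arx="ar C", OF H])

lemma Psi_graft: "ve t \<Longrightarrow> psi rho (graft t i s) = graft (psi rho t) i (psi rho s)"
  by (rule psi_graft[where Gx="Cplus C" and arx="ar C", OF H])

lemma Psi_corolla: assumes "x \<in> Cplus C" shows "psi rho (corolla C x) = forget (rho x)"
proof -
  have l: "leaf_cols (forget (rho x)) = replicate (ar C x) 1"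
    using lc_forget[of "rho x"] H[OF assms] by simp
  have m: "(map Leaf (replicate (ar C x) (1::nat)) :: 'g stree list) = replicate (ar C x) (Leaf 1)"
    by (rule map_replicate)
  have s1: "subst (forget (rho x)) (replicate (ar C x) (Leaf 1)) = forget (rho x)"
    using subst_leaves[of "forget (rho x)"] unfolding l m .
  have s2: "map (psi rho) (replicate (ar C x) (Leaf 1)) = replicate (ar C x) (Leaf 1)" by simp
  show ?thesis unfolding corolla_def psi.simps s2 s1 ..
qed

lemma E'_refl: assumes "valid1 G arG a" shows "(a, a) \<in> E'"
proof -
  have a: "a \<in> elems F'" using assms by (simp add: free_op_def)
  have r: "refl_on (elems F') E'" using congD(1)[OF E'_cong] by (simp add: equiv_def)
  show ?thesis by (rule refl_onD[OF r a])
qed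

lemma E'_sym: "(a, b) \<in> E' \<Longrightarrow> (b, a) \<in> E'"
  using congD(1)[OF E'_cong] by (meson equiv_def symD)

lemma E'_trans: "(a, b) \<in> E' \<Longrightarrow> (b, c) \<in> E' \<Longrightarrow> (a, c) \<in> E'"
  using congD(1)[OF E'_cong] by (meson equiv_def transD)

lemma Ee_refl: assumes "ve a" shows "(a, a) \<in> Ee"
proof -
  have a: "a \<in> elems Fe" using assms by (simp add: Fe_def' free_op_def)
  have r: "refl_on (elems Fe) Ee" using congD(1)[OF Ee_cong] by (simp add: equiv_def)
  show ?thesis by (rule refl_onD[OF r a])
qed

lemma Ee_sym: "(a, b) \<in> Ee \<Longrightarrow> (b, a) \<in> Ee"
  using congD(1)[OF Ee_cong] by (meson equiv_def symD)

lemma Ee_trans: "(a, b) \<in> Ee \<Longrightarrow> (b, c) \<in> Ee \<Longrightarrow> (a, c) \<in> Ee"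
  using congD(1)[OF Ee_cong] by (meson equiv_def transD)

definition Ke :: "'a stree rel" where
  "Ke = {(a, b). ve a \<and> ve b \<and> (psi rho a, psi rho b) \<in> E'}"

lemma Ke_cong: "is_congruence Fe Ke"
proof -
  have "equiv (elems Fe) Ke"
  proof (rule equivI)
    show "Ke \<subseteq> elems Fe \<times> elems Fe" by (auto simp: Ke_def Fe_def' free_op_def)
    show "refl_on (elems Fe) Ke"
    proof (rule refl_onI)
      fix a assume "a \<in> elems Fe"
      then have v: "ve a" by (simp add: Fe_def' free_op_def)
      then show "(a, a) \<in> Ke" using E'_refl Psi by (simp add: Ke_def)
    qed
    show "sym Ke" unfolding Ke_def by (rule symI) (blast intro: E'_sym)
    show "trans Ke" unfolding Ke_def by (rule transI) (blast intro: E'_trans)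
  qed
  moreover have "\<forall>(x,y)\<in>Ke. ar Fe x = ar Fe y \<and> outc Fe x = outc Fe y
        \<and> (\<forall>i\<in>{1..ar Fe x}. inc Fe x i = inc Fe y i)"
  proof (intro ballI, clarify)
    fix a b assume ab: "(a, b) \<in> Ke"
    then have v: "ve a" "ve b" "(psi rho a, psi rho b) \<in> E'" by (auto simp: Ke_def)
    have n: "nleaves a = nleaves b" using E'_props[OF v(3)] Psi[OF v(1)] Psi[OF v(2)] by simp
    have "leaf_cols a = leaf_cols b" using valid1_lc[OF v(1)] valid1_lc[OF v(2)] n by simp
    moreover have "tout (\<lambda>_. 1) a = tout (\<lambda>_. 1) b" using valid1_tout[OF v(1)] valid1_tout[OF v(2)] by simp
    ultimately show "ar Fe a = ar Fe b \<and> outc Fe a = outc Fe b \<and> (\<forall>i\<in>{1..ar Fe a}. inc Fe a i = inc Fe b i)"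
      using n by (simp add: Fe_def' free_op_def)
  qed
  moreover have "\<forall>x x' y y' i. (x,x') \<in> Ke \<longrightarrow> (y,y') \<in> Ke \<longrightarrow> comp_defined Fe x i y \<longrightarrow>
        (pcomp Fe x i y, pcomp Fe x' i y') \<in> Ke"
  proof (intro allI impI)
    fix x x' y y' i
    assume a: "(x,x') \<in> Ke" "(y,y') \<in> Ke" "comp_defined Fe x i y"
    have v: "ve x" "ve x'" "ve y" "ve y'" "(psi rho x, psi rho x') \<in> E'" "(psi rho y, psi rho y') \<in> E'"
      using a(1,2) by (auto simp: Ke_def)
    have c: "1 \<le> i" "i \<le> nleaves x" using a(3) unfolding Fe_def' comp_defined_free1 by auto
    have nx: "nleaves x' = nleaves x" using E'_props[OF v(5)] Psi[OF v(1)] Psi[OF v(2)] by simp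
    have g1: "ve (graft x i y)" by (rule valid1_graft[OF v(1) v(3) c])
    have g2: "ve (graft x' i y')" using valid1_graft[OF v(2) v(4)] c nx by simp
    have cd: "comp_defined F' (psi rho x) i (psi rho y)"
      unfolding comp_defined_free1 using Psi[OF v(1)] Psi[OF v(3)] c by simp
    have "(graft (psi rho x) i (psi rho y), graft (psi rho x') i (psi rho y')) \<in> E'"
      using congD(5)[OF E'_cong v(5) v(6) cd] by (simp add: free_op_def)
    then have "(psi rho (graft x i y), psi rho (graft x' i y')) \<in> E'"
      using Psi_graft[OF v(1)] Psi_graft[OF v(2)] by simp
    then show "(pcomp Fe x i y, pcomp Fe x' i y') \<in> Ke"
      using g1 g2 by (simp add: Ke_def Fe_def' free_op_def)
  qed
  ultimately show ?thesis unfolding is_congruence_def by blast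
qed

lemma env_rel_Ke: "env_rel C \<subseteq> Ke"
proof
  fix ab assume ab: "ab \<in> env_rel C"
  then obtain x i y where d: "ab = (graft (corolla C x) i (corolla C y), corolla C (pcomp C x i y))"
    "x \<in> Cplus C" "y \<in> Cplus C" "comp_defined C x i y"
    unfolding env_rel_def by blast
  have v: "ve (fst ab) \<and> ve (snd ab) \<and> nleaves (fst ab) = nleaves (snd ab)"
    using env_rel_valid[of "fst ab" "snd ab"] ab by simp
  have p1: "psi rho (graft (corolla C x) i (corolla C y)) = forget (graft (rho x) i (rho y))"
    using Psi_graft[OF corolla_valid[OF d(2)]] Psi_corolla[OF d(2)] Psi_corolla[OF d(3)]
    by (simp add: forget_graft)
  have p2: "psi rho (corolla C (pcomp C x i y)) = forget (rho (pcomp C x i y))"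
    using Psi_corolla Cplus_comp[OF d(2-4)] by simp
  have "(forget (graft (rho x) i (rho y)), forget (rho (pcomp C x i y))) \<in> E'"
    using E_props[OF rho_comp[OF d(4)]] by simp
  then show "ab \<in> Ke" using v d(1) p1 p2 by (simp add: Ke_def)
qed

lemma Ee_Ke: "Ee \<subseteq> Ke"
  by (rule cong_gen_least[OF Ke_cong env_rel_Ke])

lemma Psi_resp: "(a, b) \<in> Ee \<Longrightarrow> (psi rho a, psi rho b) \<in> E'"
  using Ee_Ke by (auto simp: Ke_def)

lemma relab_phi_valid: "valid_tree k' G arG o' i' t \<Longrightarrow> ve (relab phi t)"
  by (rule valid_relab[where h=phi and G'="Cplus C" and arG'="ar C" and G=G and arG=arG]) (use phi in auto)

end




context envs begin

lemma vF_Leaf_nleaves: assumes "vF S" "nleaves S = 1" shows "\<exists>c. S = Leaf c"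
proof (cases S)
  case (Leaf c) then show ?thesis by simp
next
  case (Node g ts)
  then have "2 \<le> nleaves S" using vF_nleaves(2)[of g ts] assms(1) by simp
  then show ?thesis using assms(2) by simp
qed

lemma claim: "vF S \<Longrightarrow> S = Node g ts \<Longrightarrow> (relab phi S, corolla C (ev S)) \<in> Ee"
proof (induction "nnodes S" arbitrary: S g ts rule: less_induct)
  case less
  have vS: "g \<in> G" "length ts = arG g" "\<forall>t\<in>set ts. vF t" "\<forall>i<length ts. tout outG (ts ! i) = inG g (Suc i)"
    using less.prems by auto
  show ?case
  proof (cases "\<exists>j<length ts. \<exists>h us. ts ! j = Node h us")
    case False
    have leaves: "ts ! j = Leaf (inG g (Suc j))" if "j < length ts" for j
    proof (cases "ts ! j")
      case (Leaf c)
      then show ?thesis using vS(4) that by force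
    next
      case (Node h us)
      then show ?thesis using False that by blast
    qed
    have tsc: "ts = map (\<lambda>i. Leaf (inG g (Suc i))) [0..<arG g]"
      by (rule nth_equalityI) (simp_all add: vS(2) leaves)
    have Scol: "S = colcor g" using less.prems(2) tsc by (simp add: colcor_def)
    have evS: "ev S = phi g" using Scol by (simp add: phi_def)
    have mr: "map (relab phi) ts = replicate (arG g) (Leaf 1)"
      by (rule nth_equalityI) (simp_all add: vS(2) leaves)
    have "relab phi S = corolla C (phi g)"
      using less.prems(2) mr phi[OF vS(1)] by (simp add: corolla_def)
    moreover have "ve (corolla C (phi g))" using corolla_valid phi[OF vS(1)] by blast
    ultimately show ?thesis using evS Ee_refl by simp
  next
    case True
    then obtain j h us where j: "j < length ts" "ts ! j = Node h us" by blast
    define B where "B = ts ! j"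
    define c where "c = inG g (Suc j)"
    define A where "A = Node g (ts[j := Leaf c])"
    define p where "p = nl (take j ts) + 1"
    have ts_split: "ts = take j ts @ B # drop (Suc j) ts" unfolding B_def by (rule id_take_nth_drop[OF j(1)])
    have upd: "ts[j := Leaf c] = take j ts @ Leaf c # drop (Suc j) ts"
      using j by (simp add: upd_conv_take_nth_drop)
    have gl: "graft_list (ts[j := Leaf c]) p B = take j ts @ B # drop (Suc j) ts"
      unfolding upd p_def by (simp add: graft_list_append nleaves_def)
    have SAB: "S = graft A p B"
      using less.prems(2) gl ts_split by (simp add: A_def)
    have vB: "vF B" unfolding B_def using vS(3) nth_mem[OF j(1)] by blast
    have cB: "c \<in> {1..k}" using coll vS(1,2) j unfolding is_collection_def c_def by auto
    have tB: "tout outG B = c" unfolding B_def c_def using vS(4) j(1) by blast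
    have vA: "vF A"
    proof -
      have "\<forall>t\<in>set (ts[j := Leaf c]). vF t"
        using vS(3) cB set_update_subset_insert[of ts j "Leaf c"] by auto
      moreover have "\<forall>i<length ts. tout outG (ts[j := Leaf c] ! i) = inG g (Suc i)"
      proof (intro allI impI)
        fix i assume i: "i < length ts"
        show "tout outG (ts[j := Leaf c] ! i) = inG g (Suc i)"
          using vS(4) i j(1) by (cases "i = j") (simp_all add: c_def)
      qed
      ultimately show ?thesis using vS(1,2) by (simp add: A_def)
    qed
    have sumS: "sum_list (map nnodes ts) = sum_list (map nnodes (take j ts)) + nnodes B + sum_list (map nnodes (drop (Suc j) ts))"
      using arg_cong[OF ts_split, of "\<lambda>l. sum_list (map nnodes l)"] by simp
    have sumA: "sum_list (map nnodes (ts[j := Leaf c])) = sum_list (map nnodes (take j ts)) + sum_list (map nnodes (drop (Suc j) ts))"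
      unfolding upd by simp
    have nB1: "1 \<le> nnodes B" using j by (simp add: B_def)
    have ltA: "nnodes A < nnodes S" using less.prems(2) sumS sumA nB1 by (simp add: A_def)
    have ltB: "nnodes B < nnodes S" using less.prems(2) sumS by simp
    have IA: "(relab phi A, corolla C (ev A)) \<in> Ee"
      using less.hyps[OF ltA vA A_def] .
    have IB: "(relab phi B, corolla C (ev B)) \<in> Ee"
      using less.hyps[OF ltB vB] j by (simp add: B_def)
    have nA: "nleaves A = nl (take j ts) + 1 + nl (drop (Suc j) ts)"
      by (simp add: A_def upd nleaves_def)
    have lcA: "leaf_cols A ! (p - 1) = c"
      by (simp add: A_def upd p_def nth_append)
    have cdF: "comp_defined F A p B"
      unfolding comp_defined_free using vA vB nA lcA tB by (simp add: p_def)
    note ec = ev_comp[OF cdF]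
    have pA: "p \<le> nleaves A" "1 \<le> p" using nA by (simp_all add: p_def)
    have eA: "ev A \<in> Cplus C" using ev(1)[OF vA] ev_ar(1)[OF vA] vF_nleaves(2)[of g "ts[j := Leaf c]"] vA
      by (simp add: Cplus_def A_def)
    have eB: "ev B \<in> Cplus C" using ev(1)[OF vB] ev_ar(1)[OF vB] vF_nleaves(2)[of h us] vB j
      by (simp add: Cplus_def B_def)
    have er: "(graft (corolla C (ev A)) p (corolla C (ev B)), corolla C (pcomp C (ev A) p (ev B))) \<in> Ee"
      using env_rel_Ee eA eB ec(1) unfolding env_rel_def by blast
    have cdE: "comp_defined Fe (relab phi A) p (relab phi B)"
      unfolding Fe_def' comp_defined_free1 using relab_phi_valid[OF vA] relab_phi_valid[OF vB] pA by simp
    have cg: "(graft (relab phi A) p (relab phi B), graft (corolla C (ev A)) p (corolla C (ev B))) \<in> Ee"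
      using congD(5)[OF Ee_cong IA IB cdE] by (simp add: env_free_def free_op_def)
    have "relab phi S = graft (relab phi A) p (relab phi B)" using SAB relab_graft(1) by simp
    moreover have "ev S = pcomp C (ev A) p (ev B)" using SAB ec(2) by simp
    ultimately show ?thesis using Ee_trans[OF cg er] by simp
  qed
qed

definition Kp :: "'g stree rel" where
  "Kp = {(a, b). valid1 G arG a \<and> valid1 G arG b \<and> (relab phi a, relab phi b) \<in> Ee}"

lemma Kp_cong: "is_congruence F' Kp"
proof -
  have "equiv (elems F') Kp"
  proof (rule equivI)
    show "Kp \<subseteq> elems F' \<times> elems F'" by (auto simp: Kp_def free_op_def)
    show "refl_on (elems F') Kp"
    proof (rule refl_onI)
      fix a assume "a \<in> elems F'"
      then have v: "valid1 G arG a" by (simp add: free_op_def)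
      then show "(a, a) \<in> Kp" using Ee_refl[OF relab_phi_valid[OF v]] by (simp add: Kp_def)
    qed
    show "sym Kp" unfolding Kp_def by (rule symI) (blast intro: Ee_sym)
    show "trans Kp" unfolding Kp_def by (rule transI) (blast intro: Ee_trans)
  qed
  moreover have "\<forall>(x,y)\<in>Kp. ar F' x = ar F' y \<and> outc F' x = outc F' y
        \<and> (\<forall>i\<in>{1..ar F' x}. inc F' x i = inc F' y i)"
  proof (intro ballI, clarify)
    fix a b assume ab: "(a, b) \<in> Kp"
    then have v: "valid1 G arG a" "valid1 G arG b" "(relab phi a, relab phi b) \<in> Ee" by (auto simp: Kp_def)
    have n: "nleaves a = nleaves b" using Ee_props[OF v(3)] by simp
    have "leaf_cols a = leaf_cols b" using valid1_lc[OF v(1)] valid1_lc[OF v(2)] n by simp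
    moreover have "tout (\<lambda>_. 1) a = tout (\<lambda>_. 1) b" using valid1_tout[OF v(1)] valid1_tout[OF v(2)] by simp
    ultimately show "ar F' a = ar F' b \<and> outc F' a = outc F' b \<and> (\<forall>i\<in>{1..ar F' a}. inc F' a i = inc F' b i)"
      using n by (simp add: free_op_def)
  qed
  moreover have "\<forall>x x' y y' i. (x,x') \<in> Kp \<longrightarrow> (y,y') \<in> Kp \<longrightarrow> comp_defined F' x i y \<longrightarrow>
        (pcomp F' x i y, pcomp F' x' i y') \<in> Kp"
  proof (intro allI impI)
    fix x x' y y' i
    assume a: "(x,x') \<in> Kp" "(y,y') \<in> Kp" "comp_defined F' x i y"
    have v: "valid1 G arG x" "valid1 G arG x'" "valid1 G arG y" "valid1 G arG y'"
      "(relab phi x, relab phi x') \<in> Ee" "(relab phi y, relab phi y') \<in> Ee"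
      using a(1,2) by (auto simp: Kp_def)
    have c: "1 \<le> i" "i \<le> nleaves x" using a(3) unfolding comp_defined_free1 by auto
    have nx: "nleaves x' = nleaves x" using Ee_props[OF v(5)] by simp
    have g1: "valid1 G arG (graft x i y)" by (rule valid1_graft[OF v(1) v(3) c])
    have g2: "valid1 G arG (graft x' i y')" using valid1_graft[OF v(2) v(4)] c nx by simp
    have cd: "comp_defined Fe (relab phi x) i (relab phi y)"
      unfolding Fe_def' comp_defined_free1 using relab_phi_valid[OF v(1)] relab_phi_valid[OF v(3)] c by simp
    have "(graft (relab phi x) i (relab phi y), graft (relab phi x') i (relab phi y')) \<in> Ee"
      using congD(5)[OF Ee_cong v(5) v(6) cd] by (simp add: env_free_def free_op_def)
    then have "(relab phi (graft x i y), relab phi (graft x' i y')) \<in> Ee"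
      by (simp add: relab_graft)
    then show "(pcomp F' x i y, pcomp F' x' i y') \<in> Kp"
      using g1 g2 by (simp add: Kp_def free_op_def)
  qed
  ultimately show ?thesis unfolding is_congruence_def by blast
qed

lemma relab_forget: "relab phi (forget S) = relab phi S"
  by (simp add: forget_relab relab_relab)

lemma R'_Kp: "R' \<subseteq> Kp"
proof
  fix ab assume "ab \<in> R'"
  then obtain S T where ab: "ab = (forget S, forget T)" and st: "(S, T) \<in> R" by blast
  have E: "(S, T) \<in> E" using st cong_gen_incl by blast
  have p: "vF S" "vF T" "leaf_cols S = leaf_cols T" using E_props[OF E] by auto
  have n: "nleaves S = nleaves T" using p(3) by (simp add: nleaves_def)
  have "(relab phi S, relab phi T) \<in> Ee"
  proof (cases S)
    case (Leaf c)
    then have "nleaves T = 1" using n by (simp add: nleaves_def)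
    then obtain d where "T = Leaf d" using vF_Leaf_nleaves p(2) by blast
    then show ?thesis using Leaf Ee_refl[of "Leaf 1"] by simp
  next
    case (Node g ts)
    then have "2 \<le> nleaves T" using vF_nleaves(2) p(1) n by metis
    then obtain g' ts' where T: "T = Node g' ts'" by (cases T) (auto simp: nleaves_def)
    have c1: "(relab phi S, corolla C (ev S)) \<in> Ee" by (rule claim[OF p(1) Node])
    have c2: "(relab phi T, corolla C (ev T)) \<in> Ee" by (rule claim[OF p(2) T])
    have "ev S = ev T" by (rule ev_eq[OF E])
    then have c2': "(corolla C (ev S), relab phi T) \<in> Ee" using Ee_sym[OF c2] by simp
    show ?thesis using Ee_trans[OF c1 c2'] .
  qed
  then show "ab \<in> Kp" using ab p forget_valid by (simp add: Kp_def relab_forget)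
qed

lemma E'_Kp: "E' \<subseteq> Kp"
  by (rule cong_gen_least[OF Kp_cong R'_Kp])

lemma Phi_resp: "(a, b) \<in> E' \<Longrightarrow> (relab phi a, relab phi b) \<in> Ee"
  using E'_Kp by (auto simp: Kp_def)

end




context envs begin

lemma PhiPsi: "ve a \<Longrightarrow> (relab phi (psi rho a), a) \<in> Ee"
proof (induction a)
  case (Leaf c)
  then have "c = 1" by simp
  then show ?case using Ee_refl[of "Leaf 1"] by simp
next
  case (Node x ts)
  have v: "x \<in> Cplus C" "length ts = ar C x" "\<forall>t\<in>set ts. ve t" using Node.prems by auto
  have IH: "\<forall>t\<in>set ts. (relab phi (psi rho t), t) \<in> Ee" using Node.IH v(3) by blast
  have xC: "x \<in> elems C" using v(1) by (simp add: Cplus_def)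
  have vr: "vF (rho x)" by (rule rho(3)[OF xC])
  have nr: "nleaves (rho x) = ar C x" by (rule rho_ar(1)[OF xC])
  have "2 \<le> ar C x" using v(1) by (simp add: Cplus_def)
  then obtain g' ts' where rn: "rho x = Node g' ts'" using nr by (cases "rho x") (auto simp: nleaves_def)
  have cl: "(relab phi (rho x), corolla C x) \<in> Ee" using claim[OF vr rn] ev_rho[OF xC] by simp
  have l2: "list_all2 (\<lambda>u v. (u, v) \<in> Ee) (map (\<lambda>t. relab phi (psi rho t)) ts) ts"
  proof (rule list_all2_all_nthI)
    show "length (map (\<lambda>t. relab phi (psi rho t)) ts) = length ts" by simp
    fix n assume "n < length (map (\<lambda>t. relab phi (psi rho t)) ts)"
    then have n: "n < length ts" by simp
    then show "(map (\<lambda>t. relab phi (psi rho t)) ts ! n, ts ! n) \<in> Ee" using IH nth_mem[OF n] by simp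
  qed
  have len: "length (map (\<lambda>t. relab phi (psi rho t)) ts) = nleaves (relab phi (rho x))"
    using v(2) nr by simp
  have sc: "(subst (relab phi (rho x)) (map (\<lambda>t. relab phi (psi rho t)) ts), subst (corolla C x) ts) \<in> Ee"
  proof -
    have ec: "\<And>E. is_congruence Fe E \<Longrightarrow> is_congruence (free_op (Cplus C) (ar C) (\<lambda>_. 1) (\<lambda>_ _. 1) 1) E"
      by (simp add: Fe_def')
    show ?thesis by (rule subst_cong[where G="Cplus C" and arG="ar C", OF ec[OF Ee_cong] cl len l2])
  qed
  have "subst (corolla C x) ts = Node x ts" using substl_replicate[of ts "ar C x"] v(2) by (simp add: corolla_def)
  moreover have "relab phi (psi rho (Node x ts)) = subst (relab phi (rho x)) (map (\<lambda>t. relab phi (psi rho t)) ts)"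
    by (simp add: relab_subst relab_forget o_def)
  ultimately show ?case using sc by simp
qed

lemma PsiPhi: "valid1 G arG S \<Longrightarrow> (psi rho (relab phi S), S) \<in> E'"
proof (induction S)
  case (Leaf c)
  then have "c = 1" by simp
  then show ?case using E'_refl[of "Leaf 1"] by simp
next
  case (Node g ts)
  have v: "g \<in> G" "length ts = arG g" "\<forall>t\<in>set ts. valid1 G arG t" using Node.prems by auto
  have IH: "\<forall>t\<in>set ts. (psi rho (relab phi (t)), t) \<in> E'" using Node.IH v(3) by blast
  have pg: "phi g \<in> Cplus C" "ar C (phi g) = arG g" using phi[OF v(1)] by auto
  have pgC: "phi g \<in> elems C" using pg(1) by (simp add: Cplus_def)
  have "rho (phi g) \<in> E `` {colcor g}"
    using rho(1)[OF pgC] ev(2)[OF colcor_valid[OF v(1)]] by (simp add: phi_def)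
  then have "(colcor g, rho (phi g)) \<in> E" by simp
  then have fr: "(forget (rho (phi g)), forget (colcor g)) \<in> E'" using E_props E'_sym by blast
  have fc: "forget (colcor g) = Node g (replicate (arG g) (Leaf 1))"
    by (simp add: colcor_def o_def map_replicate_const)
  have len: "length (map (\<lambda>t. psi rho (relab phi t)) ts) = nleaves (forget (rho (phi g)))"
    using v(2) rho_ar(1)[OF pgC] pg(2) by simp
  have l2: "list_all2 (\<lambda>u v. (u, v) \<in> E') (map (\<lambda>t. psi rho (relab phi t)) ts) ts"
  proof (rule list_all2_all_nthI)
    show "length (map (\<lambda>t. psi rho (relab phi t)) ts) = length ts" by simp
    fix n assume "n < length (map (\<lambda>t. psi rho (relab phi t)) ts)"
    then have n: "n < length ts" by simp
    then show "(map (\<lambda>t. psi rho (relab phi t)) ts ! n, ts ! n) \<in> E'" using IH nth_mem[OF n] by simp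
  qed
  have sc: "(subst (forget (rho (phi g))) (map (\<lambda>t. psi rho (relab phi t)) ts), subst (forget (colcor g)) ts) \<in> E'"
    by (rule subst_cong[where G=G and arG=arG, OF E'_cong fr len l2])
  have "subst (forget (colcor g)) ts = Node g ts" unfolding fc using substl_replicate[of ts "arG g"] v(2) by simp
  moreover have "psi rho (relab phi (Node g ts)) = subst (forget (rho (phi g))) (map (\<lambda>t. psi rho (relab phi t)) ts)"
    by (simp add: o_def)
  ultimately show ?case using sc by simp
qed

abbreviation "Q' \<equiv> quot_op F' E'"

definition fi :: "'a stree set \<Rightarrow> 'g stree set" where
  "fi X = E' `` {psi rho (SOME t. t \<in> X)}"

lemma Eeq: "equiv (elems Fe) Ee" by (rule congD(1)[OF Ee_cong])
lemma E'eq: "equiv (elems F') E'" by (rule congD(1)[OF E'_cong])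

lemma sX: assumes "X \<in> elems Fe // Ee"
  shows "(SOME t. t \<in> X) \<in> X" "X = Ee `` {SOME t. t \<in> X}" "ve (SOME t. t \<in> X)"
proof -
  show "(SOME t. t \<in> X) \<in> X" by (rule quot_some(1)[OF Eeq assms])
  show "X = Ee `` {SOME t. t \<in> X}" by (rule quot_some(2)[OF Eeq assms])
  have "(SOME t. t \<in> X) \<in> elems Fe" by (rule quot_some(3)[OF Eeq assms])
  then show "ve (SOME t. t \<in> X)" by (simp add: Fe_def' free_op_def)
qed

lemma class_eq_E': "(a, b) \<in> E' \<Longrightarrow> E' `` {a} = E' `` {b}"
  by (rule equiv_class_eq[OF E'eq])

lemma class_eq_Ee: "(a, b) \<in> Ee \<Longrightarrow> Ee `` {a} = Ee `` {b}"
  by (rule equiv_class_eq[OF Eeq])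

lemma fi_class: assumes "ve a" shows "fi (Ee `` {a}) = E' `` {psi rho a}"
proof -
  have a: "a \<in> elems Fe" using assms by (simp add: Fe_def' free_op_def)
  have "(a, SOME x. x \<in> Ee `` {a}) \<in> Ee" by (rule quot_some_rel[OF Eeq a])
  then have "(psi rho a, psi rho (SOME x. x \<in> Ee `` {a})) \<in> E'" by (rule Psi_resp)
  then have "E' `` {psi rho a} = E' `` {psi rho (SOME x. x \<in> Ee `` {a})}" by (rule class_eq_E')
  then show ?thesis unfolding fi_def by (rule sym)
qed

lemma fi_bij: "bij_betw fi (elems Fe // Ee) (elems F' // E')"
proof (rule bij_betw_imageI)
  show "inj_on fi (elems Fe // Ee)"
  proof (rule inj_onI)
    fix X Y assume X: "X \<in> elems Fe // Ee" and Y: "Y \<in> elems Fe // Ee" and eq: "fi X = fi Y"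
    let ?x = "SOME t. t \<in> X" and ?y = "SOME t. t \<in> Y"
    have vx: "ve ?x" and vy: "ve ?y" using sX(3)[OF X] sX(3)[OF Y] by auto
    have "E' `` {psi rho ?x} = E' `` {psi rho ?y}" using eq by (simp add: fi_def)
    moreover have "psi rho ?x \<in> elems F'" "psi rho ?y \<in> elems F'" using Psi[OF vx] Psi[OF vy] by (auto simp: free_op_def)
    ultimately have "(psi rho ?x, psi rho ?y) \<in> E'" using eq_equiv_class_iff[OF E'eq] by blast
    then have "(relab phi (psi rho ?x), relab phi (psi rho ?y)) \<in> Ee" by (rule Phi_resp)
    then have "(?x, ?y) \<in> Ee" by (rule Ee_trans[OF Ee_sym[OF PhiPsi[OF vx]] Ee_trans[OF _ PhiPsi[OF vy]]])
    then have cl: "Ee `` {?x} = Ee `` {?y}" by (rule class_eq_Ee)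
    have "X = Ee `` {?x}" by (rule sX(2)[OF X])
    also have "\<dots> = Ee `` {?y}" by (rule cl)
    also have "\<dots> = Y" by (rule sX(2)[OF Y, symmetric])
    finally show "X = Y" .
  qed
  show "fi ` (elems Fe // Ee) = elems F' // E'"
  proof
    show "fi ` (elems Fe // Ee) \<subseteq> elems F' // E'"
    proof
      fix Z assume "Z \<in> fi ` (elems Fe // Ee)"
      then obtain X where X: "X \<in> elems Fe // Ee" "Z = fi X" by blast
      have "psi rho (SOME t. t \<in> X) \<in> elems F'" using Psi[OF sX(3)[OF X(1)]] by (simp add: free_op_def)
      then show "Z \<in> elems F' // E'" unfolding X(2) fi_def by (rule quotientI)
    qed
    show "elems F' // E' \<subseteq> fi ` (elems Fe // Ee)"
    proof
      fix Z assume "Z \<in> elems F' // E'"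
      then obtain S where S: "S \<in> elems F'" "Z = E' `` {S}" by (rule quotientE)
      have vS: "valid1 G arG S" using S(1) by (simp add: free_op_def)
      have vr: "ve (relab phi S)" by (rule relab_phi_valid[OF vS])
      have "fi (Ee `` {relab phi S}) = E' `` {psi rho (relab phi S)}" by (rule fi_class[OF vr])
      also have "\<dots> = Z" using class_eq_E'[OF PsiPhi[OF vS]] S(2) by simp
      finally have "fi (Ee `` {relab phi S}) = Z" .
      moreover have "Ee `` {relab phi S} \<in> elems Fe // Ee"
        using vr by (intro quotientI) (simp add: Fe_def' free_op_def)
      ultimately show "Z \<in> fi ` (elems Fe // Ee)" by blast
    qed
  qed
qed

lemma Env_eq: "Env C = quot_op Fe Ee" by (simp add: Env_def)

lemma main: "admits_presentation 1 (Env C) G arG (\<lambda>_. 1) (\<lambda>_ _. 1) R'"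
proof -
  have a: "R' \<subseteq> elems F' \<times> elems F'"
  proof
    fix ab assume "ab \<in> R'"
    then obtain S T where ab: "ab = (forget S, forget T)" and st: "(S, T) \<in> R" by blast
    then have "vF S" "vF T" using Rsub by (auto simp: free_op_def)
    then show "ab \<in> elems F' \<times> elems F'" using ab by (simp add: free_op_def forget_valid)
  qed
  have b: "\<forall>(S,T)\<in>R'. ar F' S = ar F' T \<and> outc F' S = outc F' T
          \<and> (\<forall>i\<in>{1..ar F' S}. inc F' S i = inc F' T i)"
  proof (rule ballI)
    have b0: "\<forall>(S,T)\<in>E'. ar F' S = ar F' T \<and> outc F' S = outc F' T
          \<and> (\<forall>i\<in>{1..ar F' S}. inc F' S i = inc F' T i)"
      using E'_cong unfolding is_congruence_def by blast
    fix ST assume "ST \<in> R'"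
    then have st: "ST \<in> E'" by (rule subsetD[OF cong_gen_incl])
    from b0 st show "case ST of (S, T) \<Rightarrow> ar F' S = ar F' T \<and> outc F' S = outc F' T
          \<and> (\<forall>i\<in>{1..ar F' S}. inc F' S i = inc F' T i)" by (rule bspec)
  qed
  have iso': "is_iso 1 (Env C) Q' fi"
    unfolding is_iso_def
  proof (intro conjI)
    show "bij_betw fi (elems (Env C)) (elems Q')"
      using fi_bij by (simp add: Env_eq quot_op_def)
    show "\<forall>x\<in>elems (Env C). ar Q' (fi x) = ar (Env C) x \<and> outc Q' (fi x) = outc (Env C) x
        \<and> (\<forall>i\<in>{1..ar (Env C) x}. inc Q' (fi x) i = inc (Env C) x i)"
    proof
      fix X assume "X \<in> elems (Env C)"
      then have X: "X \<in> elems Fe // Ee" by (simp add: Env_eq quot_op_def)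
      let ?x = "SOME t. t \<in> X"
      have vx: "ve ?x" by (rule sX(3)[OF X])
      have px: "psi rho ?x \<in> elems F'" using Psi[OF vx] by (simp add: free_op_def)
      note q = quot_ar[OF E'_cong px]
      have e1: "ar (Env C) X = nleaves ?x" "outc (Env C) X = 1"
        "\<And>i. inc (Env C) X i = leaf_cols ?x ! (i - 1)"
        using valid1_tout[OF vx] by (simp_all add: Env_eq quot_op_def Fe_def' free_op_def)
      have e2: "ar Q' (fi X) = nleaves (psi rho ?x)" "outc Q' (fi X) = 1"
        "\<And>i. i \<in> {1..nleaves (psi rho ?x)} \<Longrightarrow> inc Q' (fi X) i = leaf_cols (psi rho ?x) ! (i - 1)"
        using q valid1_tout[of G arG "psi rho ?x"] Psi[OF vx] unfolding fi_def by (simp_all add: free_op_def)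
      have n: "nleaves (psi rho ?x) = nleaves ?x" using Psi[OF vx] by simp
      have lc: "leaf_cols (psi rho ?x) = leaf_cols ?x"
        using valid1_lc[OF vx] valid1_lc[of G arG "psi rho ?x"] Psi[OF vx] by simp
      show "ar Q' (fi X) = ar (Env C) X \<and> outc Q' (fi X) = outc (Env C) X
        \<and> (\<forall>i\<in>{1..ar (Env C) X}. inc Q' (fi X) i = inc (Env C) X i)"
        using e1 e2 n lc by simp
    qed
    show "\<forall>X i Y. comp_defined (Env C) X i Y \<longrightarrow> fi (pcomp (Env C) X i Y) = pcomp Q' (fi X) i (fi Y)"
    proof (intro allI impI)
      fix X i Y assume cd: "comp_defined (Env C) X i Y"
      then have X: "X \<in> elems Fe // Ee" and Y: "Y \<in> elems Fe // Ee"
        by (auto simp: comp_defined_def Env_eq quot_op_def)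
      let ?x = "SOME t. t \<in> X" and ?y = "SOME t. t \<in> Y"
      have vx: "ve ?x" and vy: "ve ?y" using sX(3)[OF X] sX(3)[OF Y] by auto
      have i: "1 \<le> i" "i \<le> nleaves ?x" using cd by (auto simp: comp_defined_def Env_eq quot_op_def Fe_def' free_op_def)
      have vg: "ve (graft ?x i ?y)" by (rule valid1_graft[OF vx vy i])
      have "pcomp (Env C) X i Y = Ee `` {graft ?x i ?y}"
        by (simp add: Env_eq quot_op_def Fe_def' free_op_def)
      then have "fi (pcomp (Env C) X i Y) = E' `` {psi rho (graft ?x i ?y)}" using fi_class[OF vg] by simp
      also have "\<dots> = E' `` {graft (psi rho ?x) i (psi rho ?y)}" using Psi_graft[OF vx] by simp
      also have "\<dots> = pcomp Q' (E' `` {psi rho ?x}) i (E' `` {psi rho ?y})"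
      proof -
        have "comp_defined F' (psi rho ?x) i (psi rho ?y)"
          unfolding comp_defined_free1 using Psi[OF vx] Psi[OF vy] i by simp
        from quot_pcomp[OF E'_cong this] show ?thesis by (simp add: free_op_def)
      qed
      also have "\<dots> = pcomp Q' (fi X) i (fi Y)" by (simp add: fi_def)
      finally show "fi (pcomp (Env C) X i Y) = pcomp Q' (fi X) i (fi Y)" .
    qed
    show "\<forall>c\<in>{1..1}. fi (unit (Env C) c) = unit Q' c"
    proof
      fix c :: nat assume "c \<in> {1..1}"
      then have c: "c = 1" by simp
      have "fi (unit (Env C) c) = fi (Ee `` {Leaf 1})" using c by (simp add: Env_eq quot_op_def Fe_def' free_op_def)
      also have "\<dots> = E' `` {Leaf 1}" using fi_class[of "Leaf 1"] by simp
      also have "\<dots> = unit Q' c" using c by (simp add: quot_op_def free_op_def)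
      finally show "fi (unit (Env C) c) = unit Q' c" .
    qed
  qed
  show ?thesis
    unfolding admits_presentation_def Let_def isomorphic_def using a b iso' by blast
qed

end



theorem proposition1p7:
  fixes k :: nat
    and C :: "'a coloperad"
    and G :: "'g set" and arG :: "'g \<Rightarrow> nat" and outG :: "'g \<Rightarrow> nat"
    and inG :: "'g \<Rightarrow> nat \<Rightarrow> nat"
    and R :: "'g stree rel"
  assumes "1 \<le> k"
    and "is_coloperad k C"
    and "is_collection k G arG outG inG"
    and "equiv (elems (free_op G arG outG inG k)) R"
    and "admits_presentation k C G arG outG inG R"
  shows "admits_presentation 1 (Env C) G arG (\<lambda>_. 1) (\<lambda>_ _. 1)
           {(forget S, forget T) | S T. (S, T) \<in> R}"
proof -
  have Rsub: "R \<subseteq> elems (free_op G arG outG inG k) \<times> elems (free_op G arG outG inG k)"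
    and Rprof: "\<forall>(S,T)\<in>R. ar (free_op G arG outG inG k) S = ar (free_op G arG outG inG k) T
          \<and> outc (free_op G arG outG inG k) S = outc (free_op G arG outG inG k) T
          \<and> (\<forall>i\<in>{1..ar (free_op G arG outG inG k) S}.
               inc (free_op G arG outG inG k) S i = inc (free_op G arG outG inG k) T i)"
    and iso: "isomorphic k C (quot_op (free_op G arG outG inG k) (cong_gen (free_op G arG outG inG k) R))"
    using assms(5) unfolding admits_presentation_def Let_def by blast+
  obtain f0 where f0: "is_iso k C (quot_op (free_op G arG outG inG k) (cong_gen (free_op G arG outG inG k) R)) f0"
    using iso unfolding isomorphic_def by blast
  interpret envs k C G arG outG inG R f0
    by (rule envs.intro[OF assms(2) assms(3) Rsub Rprof f0])
  show ?thesis by (rule main)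
qed

end
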